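(* Let $L_1,L_2\in(0,\infty]$, not both equal to $\infty$, and $\mu_1,\mu_2\in\mathbb{R}$ with $\mu_1<L_1$, $\mu_2<L_2$, and assume $\mu_1+\mu_2>0$ or $\mu_1=\mu_2=0$. Let $f_1\in\mathcal{F}_{\mu_1,L_1}$, $f_2\in\mathcal{F}_{\mu_2,L_2}$, with $F=f_1-f_2$ bounded below and $F^*:=\inf F$. Run $N\ge1$ DCA iterations from $x^0$, producing $x^1,\dots,x^N$, where at iteration $k$ ($0\le k\le N-1$) the subgradient $g_2^k\in\partial f_2(x^k)$ is selected; set $g_1^{k}:=g_2^{k-1}\in\partial f_1(x^{k})$ for $1\le k\le N$, and let $g_1^0\in\partial f_1(x^0)$ and $g_2^N\in\partial f_2(x^N)$ be arbitrary. If $(L_1,L_2,\mu_1,\mu_2)$ lies in the domain $D_i$ for some $i\in\{1,\dots,8\}$ and $p_i:=\sigma_i+\sigma_i^+>0$, then $$\frac12\min_{0\le k\le N}\|g_1^k-g_2^k\|^2\ \le\ \frac{F(x^0)-F(x^N)}{p_i N}.$$ If in addition $L_1>\mu_2$, then $$\frac12\min_{0\le k\le N}\|g_1^k-g_2^k\|^2\ \le\ \frac{F(x^0)-F^*}{p_i N+\frac{1}{L_1-\mu_2}}$$ (with $\frac{1}{L_1-\mu_2}=0$ if $L_1=\infty$). Here the domains and constants are: with $S_1:=\mu_1^{-1}+\mu_2^{-1}+L_2^{-1}$, $S_2:=\mu_1^{-1}+\mu_2^{-1}+L_1^{-1}$, (1) $D_1$: $L_1\ge L_2>\mu_1\ge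 0$ and either $\mu_2\ge 0$ or [$\mu_1>-\mu_2>0$ and $S_1\le L_1^{-1}(2+L_2/\mu_2)$]; $\sigma_1=\frac{L_2-\mu_1}{L_2(L_1-\mu_1)}$, $\sigma_1^+=\frac{1}{L_2}\big(1+\frac{\mu_1(L_1-L_2)}{L_2(L_1-\mu_1)}\big)$. (2) $D_2$: $L_2\ge L_1>\mu_2\ge 0$ and either $\mu_1\ge 0$ or [$\mu_2>-\mu_1>0$ and $S_2\le L_2^{-1}(2+L_1/\mu_1)$]; $\sigma_2=\frac{1}{L_1}\big(1+\frac{\mu_2(L_2-L_1)}{L_1(L_2-\mu_2)}\big)$, $\sigma_2^+=\frac{L_1-\mu_2}{L_1(L_2-\mu_2)}$. (3) $D_3$: $\mu_1>-\mu_2>0$, $L_2>\mu_1$, $L_1>\mu_2$, $L_1^{-1}(2+L_2/\mu_2)\le S_1\le 0$; $\sigma_3=\frac{L_1^{-1}S_1}{S_1-L_1^{-1}}$, $\sigma_3^+=\frac{1}{L_2+\mu_2}$. (4) $D_4$: $\mu_2>-\mu_1>0$, $L_2>\mu_1$, $L_1>\mu_2$, $L_2^{-1}(2+L_1/\mu_1)\le S_2\le 0$; $\sigma_4=\frac{1}{L_1+\mu_1}$, $\sigma_4^+=\frac{L_2^{-1}S_2}{S_2-L_2^{-1}}$. (5) $D_5$: $\mu_1>-\mu_2>0$, $L_1>\mu_2$, $\max\{L_1^{-1}(2+L_2/\mu_2),0\}<S_1$; $\sigma_5=0$, $\sigma_5^+=\frac{\mu_1+\mu_2}{\mu_2^2}$.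 (6) $D_6$: $\mu_2>-\mu_1>0$, $L_2>\mu_1$, $\max\{L_2^{-1}(2+L_1/\mu_1),0\}<S_2$; $\sigma_6=\frac{\mu_1+\mu_2}{\mu_1^2}$, $\sigma_6^+=0$. (7) $D_7$: $L_1>\mu_1>L_2>0$ and either $\mu_2\ge0$ or [$\mu_2<0$ and $S_1\le0$]; $\sigma_7=0$, $\sigma_7^+=\frac{L_2+\mu_1}{L_2^2}$. (8) $D_8$: $L_2>\mu_2>L_1>0$ and either $\mu_1\ge0$ or [$\mu_1<0$ and $S_2\le0$]; $\sigma_8=\frac{L_1+\mu_2}{L_1^2}$, $\sigma_8^+=0$. Whenever $L_1$ or $L_2$ equals $\infty$, all expressions are interpreted as limits as that parameter tends to $+\infty$.
   Context: For $L\in(0,\infty]$ and $\mu<L$, $\mathcal{F}_{\mu,L}=\mathcal{F}_{\mu,L}(\mathbb{R}^d)$ denotes the class of proper lower semicontinuous functions $f:\mathbb{R}^d\to\mathbb{R}$ such that $f-\frac{\mu}{2}\|\cdot\|^2$ is convex and, if $L<\infty$, also $\frac{L}{2}\|\cdot\|^2-f$ is convex (for $L=\infty$ only the first condition is imposed). Subdifferential: for convex $f$, $\partial f(x)=\{g:\ f(y)\ge f(x)+\langle g,y-x\rangle\ \forall y\}$; for $f\in\mathcal{F}_{\mu,L}$ with $\mu<0$, $\partial f(x):=\{g-\mu x:\ g\in\partial\tilde f(x)\}$ where $\tilde f=f-\frac{\mu}{2}\|\cdot\|^2$ is convex. One DCA iteration from $x$: select $g_2\in\partial f_2(x)$, then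 select $x^+\in\arg\min_{w\in\mathbb{R}^d}\{f_1(w)-\langle g_2,w\rangle\}$ (assumed to exist); the optimality condition gives $g_2\in\partial f_1(x^+)$. *)

theory Defs
  imports "HOL-Analysis.Analysis" "HOL-Library.Extended_Real"
begin

definition lsc_fun :: "('a::topological_space \<Rightarrow> real) \<Rightarrow> bool" where
  "lsc_fun f \<longleftrightarrow> (\<forall>c. closed {x. f x \<le> c})"

definition FmuL :: "real \<Rightarrow> ereal \<Rightarrow> ('a::euclidean_space \<Rightarrow> real) \<Rightarrow> bool" where
  "FmuL mu L f \<longleftrightarrow> lsc_fun f
     \<and> convex_on UNIV (\<lambda>x. f x - mu / 2 * (norm x)\<^sup>2)
     \<and> (L \<noteq> \<infinity> \<longrightarrow> convex_on UNIV (\<lambda>x. real_of_ereal L / 2 * (norm x)\<^sup>2 - f x))"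

definition conv_subdiff :: "('a::real_inner \<Rightarrow> real) \<Rightarrow> 'a \<Rightarrow> 'a set" where
  "conv_subdiff f x = {g. \<forall>y. f y \<ge> f x + inner g (y - x)}"

text \<open>Subdifferential of f in F_{mu,L}: the convex one if mu >= 0 (f convex), otherwise
  shifted from the convex function f - mu/2 |.|^2.\<close>
definition subdiff :: "real \<Rightarrow> ('a::real_inner \<Rightarrow> real) \<Rightarrow> 'a \<Rightarrow> 'a set" where
  "subdiff mu f x = (if mu \<ge> 0 then conv_subdiff f x
     else {g + mu *\<^sub>R x | g. g \<in> conv_subdiff (\<lambda>y. f y - mu / 2 * (norm y)\<^sup>2) x})"

definition ext_val :: "(real \<Rightarrow> real \<Rightarrow> real) \<Rightarrow> ereal \<Rightarrow> ereal \<Rightarrow> ereal" where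
  "ext_val e L1 L2 =
     (if L1 = \<infinity> \<and> L2 \<noteq> \<infinity> then Lim at_top (\<lambda>t. ereal (e t (real_of_ereal L2)))
      else if L2 = \<infinity> \<and> L1 \<noteq> \<infinity> then Lim at_top (\<lambda>t. ereal (e (real_of_ereal L1) t))
      else ereal (e (real_of_ereal L1) (real_of_ereal L2)))"

definition S1f :: "real \<Rightarrow> real \<Rightarrow> real \<Rightarrow> real \<Rightarrow> real" where
  "S1f mu1 mu2 = (\<lambda>l1 l2. 1/mu1 + 1/mu2 + 1/l2)"

definition S2f :: "real \<Rightarrow> real \<Rightarrow> real \<Rightarrow> real \<Rightarrow> real" where
  "S2f mu1 mu2 = (\<lambda>l1 l2. 1/mu1 + 1/mu2 + 1/l1)"

definition T1f :: "real \<Rightarrow> real \<Rightarrow> real \<Rightarrow> real \<Rightarrow> real" where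
  "T1f mu1 mu2 = (\<lambda>l1 l2. (1/l1) * (2 + l2/mu2))"

definition T2f :: "real \<Rightarrow> real \<Rightarrow> real \<Rightarrow> real \<Rightarrow> real" where
  "T2f mu1 mu2 = (\<lambda>l1 l2. (1/l2) * (2 + l1/mu1))"

definition inDom :: "nat \<Rightarrow> ereal \<Rightarrow> ereal \<Rightarrow> real \<Rightarrow> real \<Rightarrow> bool" where
  "inDom i L1 L2 mu1 mu2 =
    (let S1 = ext_val (S1f mu1 mu2) L1 L2; S2 = ext_val (S2f mu1 mu2) L1 L2;
         T1 = ext_val (T1f mu1 mu2) L1 L2; T2 = ext_val (T2f mu1 mu2) L1 L2 in
    (if i = 1 then L1 \<ge> L2 \<and> L2 > ereal mu1 \<and> mu1 \<ge> 0 \<and>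
        (mu2 \<ge> 0 \<or> (mu1 > - mu2 \<and> - mu2 > 0 \<and> S1 \<le> T1))
     else if i = 2 then L2 \<ge> L1 \<and> L1 > ereal mu2 \<and> mu2 \<ge> 0 \<and>
        (mu1 \<ge> 0 \<or> (mu2 > - mu1 \<and> - mu1 > 0 \<and> S2 \<le> T2))
     else if i = 3 then mu1 > - mu2 \<and> - mu2 > 0 \<and> L2 > ereal mu1 \<and> L1 > ereal mu2 \<and>
        T1 \<le> S1 \<and> S1 \<le> 0
     else if i = 4 then mu2 > - mu1 \<and> - mu1 > 0 \<and> L2 > ereal mu1 \<and> L1 > ereal mu2 \<and>
        T2 \<le> S2 \<and> S2 \<le> 0
     else if i = 5 then mu1 > - mu2 \<and> - mu2 > 0 \<and> L1 > ereal mu2 \<and> max T1 0 < S1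
     else if i = 6 then mu2 > - mu1 \<and> - mu1 > 0 \<and> L2 > ereal mu1 \<and> max T2 0 < S2
     else if i = 7 then L1 > ereal mu1 \<and> ereal mu1 > L2 \<and> L2 > 0 \<and>
        (mu2 \<ge> 0 \<or> (mu2 < 0 \<and> S1 \<le> 0))
     else if i = 8 then L2 > ereal mu2 \<and> ereal mu2 > L1 \<and> L1 > 0 \<and>
        (mu1 \<ge> 0 \<or> (mu1 < 0 \<and> S2 \<le> 0))
     else False))"

definition sigma_f :: "nat \<Rightarrow> real \<Rightarrow> real \<Rightarrow> real \<Rightarrow> real \<Rightarrow> real" where
  "sigma_f i mu1 mu2 = (\<lambda>l1 l2.
     (if i = 1 then (l2 - mu1) / (l2 * (l1 - mu1))
      else if i = 2 then (1/l1) * (1 + mu2 * (l2 - l1) / (l1 * (l2 - mu2)))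
      else if i = 3 then ((1/l1) * S1f mu1 mu2 l1 l2) / (S1f mu1 mu2 l1 l2 - 1/l1)
      else if i = 4 then 1 / (l1 + mu1)
      else if i = 5 then 0
      else if i = 6 then (mu1 + mu2) / mu1\<^sup>2
      else if i = 7 then 0
      else if i = 8 then (l1 + mu2) / l1\<^sup>2
      else 0))"

definition sigmap_f :: "nat \<Rightarrow> real \<Rightarrow> real \<Rightarrow> real \<Rightarrow> real \<Rightarrow> real" where
  "sigmap_f i mu1 mu2 = (\<lambda>l1 l2.
     (if i = 1 then (1/l2) * (1 + mu1 * (l1 - l2) / (l2 * (l1 - mu1)))
      else if i = 2 then (l1 - mu2) / (l1 * (l2 - mu2))
      else if i = 3 then 1 / (l2 + mu2)
      else if i = 4 then ((1/l2) * S2f mu1 mu2 l1 l2) / (S2f mu1 mu2 l1 l2 - 1/l2)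
      else if i = 5 then (mu1 + mu2) / mu2\<^sup>2
      else if i = 6 then 0
      else if i = 7 then (l2 + mu1) / l2\<^sup>2
      else if i = 8 then 0
      else 0))"

definition p_const :: "nat \<Rightarrow> ereal \<Rightarrow> ereal \<Rightarrow> real \<Rightarrow> real \<Rightarrow> ereal" where
  "p_const i L1 L2 mu1 mu2 =
     ext_val (sigma_f i mu1 mu2) L1 L2 + ext_val (sigmap_f i mu1 mu2) L1 L2"

end

theory Submission
  imports Defs
begin

lemma eps_lemma:
  fixes a b C :: real
  assumes C: "C \<ge> 0" and h: "\<And>t. 0 < t \<Longrightarrow> t \<le> 1 \<Longrightarrow> a \<ge> b - C * t"
  shows "a \<ge> b"
proof (rule ccontr)
  define e where "e = b - a"
  assume "\<not> a \<ge> b"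
  hence d: "e > 0" by (simp add: e_def)
  define t where "t = min 1 (e / (2 * (C + 1)))"
  have t0: "t > 0" "t \<le> 1" using d C by (auto simp: t_def)
  have "t \<le> e / (2 * (C + 1))" by (simp add: t_def)
  hence "C * t \<le> C * (e / (2 * (C + 1)))" by (rule mult_left_mono[OF _ C])
  also have "\<dots> \<le> e / 2" using C d by (simp add: field_simps)
  finally have 1: "C * t \<le> e / 2" .
  have 2: "e \<le> C * t" using h[OF t0] by (simp add: e_def)
  show False using 1 2 d by linarith
qed

lemma norm_diff_sq:
  fixes x z :: "'a::real_inner"
  shows "(norm (z - x))\<^sup>2 = (norm z)\<^sup>2 - (norm x)\<^sup>2 - 2 * inner x (z - x)"
  by (simp add: power2_norm_eq_inner inner_diff inner_commute algebra_simps)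

lemma norm_add_sq:
  fixes x v :: "'a::real_inner"
  shows "(norm (x + v))\<^sup>2 = (norm x)\<^sup>2 + 2 * inner x v + (norm v)\<^sup>2"
  by (simp add: power2_norm_eq_inner inner_add inner_commute algebra_simps)

lemma norm_scaleR_sq:
  fixes v :: "'a::real_normed_vector"
  shows "(norm (t *\<^sub>R v))\<^sup>2 = t\<^sup>2 * (norm v)\<^sup>2"
  by (simp add: power_mult_distrib power2_abs)

lemma convex_local_global:
  fixes h :: "'a::real_inner \<Rightarrow> real"
  assumes cvx: "convex_on UNIV h" and K: "K \<ge> 0"
    and lb: "\<And>w. h w \<ge> h x + inner s (w - x) - K * (norm (w - x))\<^sup>2"
  shows "h z \<ge> h x + inner s (z - x)"
proof -
  define v where "v = z - x"
  have main: "h z - h x \<ge> inner s v - (K * (norm v)\<^sup>2) * t" if t: "0 < t" "t \<le> 1" for t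
  proof -
    define w where "w = (1 - t) *\<^sub>R x + t *\<^sub>R z"
    have wx: "w - x = t *\<^sub>R v" unfolding w_def v_def scaleR_diff_left scaleR_diff_right by simp
    have c: "h w \<le> (1 - t) * h x + t * h z" unfolding w_def by (rule convex_onD[OF cvx]) (use t in auto)
    have l: "h w \<ge> h x + t * inner s v - K * (t\<^sup>2 * (norm v)\<^sup>2)"
    proof -
      have n1: "(norm (w - x))\<^sup>2 = t\<^sup>2 * (norm v)\<^sup>2" by (simp only: wx norm_scaleR_sq)
      have n2: "inner s (w - x) = t * inner s v" by (simp only: wx inner_scaleR_right)
      show ?thesis using lb[of w] unfolding n1 n2 .
    qed
    have e1: "t * (h z - h x) = ((1 - t) * h x + t * h z) - h x" by algebra
    have e2: "t * (inner s v - (K * (norm v)\<^sup>2) * t) = (h x + t * inner s v - K * (t\<^sup>2 * (norm v)\<^sup>2)) - h x"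
      by algebra
    have "t * (inner s v - (K * (norm v)\<^sup>2) * t) \<le> t * (h z - h x)"
      unfolding e1 e2 using c l by linarith
    thus ?thesis using t by simp
  qed
  have "h z - h x \<ge> inner s v"
  proof (rule eps_lemma[where C = "K * (norm v)\<^sup>2"])
    show "0 \<le> K * (norm v)\<^sup>2" using K by simp
  qed (rule main)
  thus ?thesis by (simp add: v_def)
qed

definition subg :: "('a::real_inner \<Rightarrow> real) \<Rightarrow> real \<Rightarrow> 'a \<Rightarrow> 'a \<Rightarrow> bool" where
  "subg f mu x g \<longleftrightarrow> (\<forall>z. f z \<ge> f x + inner g (z - x) + mu / 2 * (norm (z - x))\<^sup>2)"

lemma subg_h:
  fixes f :: "'a::real_inner \<Rightarrow> real"
  shows "subg f mu x g \<longleftrightarrow> (\<forall>z. f z - mu/2 * (norm z)\<^sup>2 \<ge>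
            f x - mu/2 * (norm x)\<^sup>2 + inner (g - mu *\<^sub>R x) (z - x))"
proof -
  have e: "f x + inner g (z - x) + mu / 2 * (norm (z - x))\<^sup>2 =
        (f x - mu/2 * (norm x)\<^sup>2 + inner (g - mu *\<^sub>R x) (z - x)) + mu/2 * (norm z)\<^sup>2" for z
    unfolding norm_diff_sq[of z x] inner_diff_left inner_scaleR_left by algebra
  show ?thesis unfolding subg_def e le_diff_eq ..
qed

lemma FmuL_convex: "FmuL mu L f \<Longrightarrow> convex_on UNIV (\<lambda>x. f x - mu / 2 * (norm x)\<^sup>2)"
  by (simp add: FmuL_def)

lemma subg_from_lb:
  fixes f :: "'a::euclidean_space \<Rightarrow> real"
  assumes F: "FmuL mu L f" and K: "K \<ge> 0"
    and lb: "\<And>w. f w \<ge> f x + inner g (w - x) + (mu/2 - K) * (norm (w - x))\<^sup>2"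
  shows "subg f mu x g"
proof -
  let ?h = "\<lambda>x. f x - mu / 2 * (norm x)\<^sup>2"
  have "?h w \<ge> ?h x + inner (g - mu *\<^sub>R x) (w - x) - K * (norm (w - x))\<^sup>2" for w
  proof -
    have e: "f x + inner g (w - x) + (mu/2 - K) * (norm (w - x))\<^sup>2 =
        ?h x + inner (g - mu *\<^sub>R x) (w - x) - K * (norm (w - x))\<^sup>2 + mu/2 * (norm w)\<^sup>2"
      unfolding norm_diff_sq[of w x] inner_diff_left inner_scaleR_left by (simp add: field_simps)
    show ?thesis using lb[of w] unfolding e by simp
  qed
  hence "?h z \<ge> ?h x + inner (g - mu *\<^sub>R x) (z - x)" for z
    by (intro convex_local_global[OF FmuL_convex[OF F] K])
  thus ?thesis unfolding subg_h by blast
qed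

lemma subg_from_subdiff:
  fixes f :: "'a::euclidean_space \<Rightarrow> real"
  assumes F: "FmuL mu L f" and g: "g \<in> subdiff mu f x"
  shows "subg f mu x g"
proof (cases "mu \<ge> 0")
  case True
  hence "f w \<ge> f x + inner g (w - x)" for w using g by (simp add: subdiff_def conv_subdiff_def)
  thus ?thesis using True by (intro subg_from_lb[OF F, of "mu/2"]) auto
next
  case False
  then obtain g' where gg: "g = g' + mu *\<^sub>R x"
    and g': "g' \<in> conv_subdiff (\<lambda>y. f y - mu / 2 * (norm y)\<^sup>2) x"
    using g by (auto simp: subdiff_def)
  show ?thesis unfolding subg_h using g' by (simp add: gg conv_subdiff_def)
qed

lemma subg_from_min:
  fixes f :: "'a::euclidean_space \<Rightarrow> real"
  assumes F: "FmuL mu L f" and lb: "\<And>w. f w \<ge> f x + inner g (w - x)"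
  shows "subg f mu x g"
proof (rule subg_from_lb[OF F, of "max mu 0 / 2"])
  fix w
  have "(mu/2 - max mu 0 / 2) * (norm (w - x))\<^sup>2 \<le> 0"
    by (intro mult_nonpos_nonneg) auto
  thus "f w \<ge> f x + inner g (w - x) + (mu/2 - max mu 0 / 2) * (norm (w - x))\<^sup>2"
    using lb[of w] by linarith
qed auto

lemma norm_lin_sq:
  fixes x v :: "'a::real_inner"
  shows "(norm (x + c *\<^sub>R v))\<^sup>2 = (norm x)\<^sup>2 + 2 * c * inner x v + c\<^sup>2 * (norm v)\<^sup>2"
  unfolding power2_norm_eq_inner inner_add_left inner_add_right inner_scaleR_left inner_scaleR_right
    inner_commute[of v x] by algebra

lemma descent:
  fixes h :: "'a::real_inner \<Rightarrow> real"
  assumes q: "convex_on UNIV (\<lambda>w. Lp/2 * (norm w)\<^sup>2 - h w)" and Lp: "Lp \<ge> 0"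
    and lb: "\<And>w. h w \<ge> h x + inner s (w - x)"
  shows "h z \<le> h x + inner s (z - x) + Lp/2 * (norm (z - x))\<^sup>2"
proof -
  define v where "v = z - x"
  have zv: "z = x + 1 *\<^sub>R v" by (simp add: v_def)
  define q where "q = (\<lambda>w. Lp/2 * (norm w)\<^sup>2 - h w)"
  have main: "h x + inner s v + Lp/2 * (norm v)\<^sup>2 - h z \<ge> 0 - (Lp/2 * (norm v)\<^sup>2) * \<tau>"
    if tau: "0 < \<tau>" "\<tau> \<le> 1" for \<tau>
  proof -
    define t where "t = \<tau> / (1 + \<tau>)"
    define w where "w = x + (- \<tau>) *\<^sub>R v"
    have t01: "0 \<le> t" "t \<le> 1" using tau by (auto simp: t_def)
    have coef: "t - (1 - t) * \<tau> = 0" using tau by (simp add: t_def field_simps)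
    have xw: "(1 - t) *\<^sub>R w + t *\<^sub>R z = x + (t - (1 - t) * \<tau>) *\<^sub>R v"
      unfolding w_def v_def by (simp add: algebra_simps)
    have xw': "(1 - t) *\<^sub>R w + t *\<^sub>R z = x" unfolding xw coef by simp
    have c: "q x \<le> (1 - t) * q w + t * q z"
      using convex_onD[OF q, of t w z] t01 unfolding q_def xw' by simp
    have c2: "(1 + \<tau>) * q x \<le> q w + \<tau> * q z"
    proof -
      have "(1 + \<tau>) * q x \<le> (1 + \<tau>) * ((1 - t) * q w + t * q z)"
        by (rule mult_left_mono[OF c]) (use tau in simp)
      also have "(1 + \<tau>) * ((1 - t) * q w + t * q z) = ((1 + \<tau>) * (1 - t)) * q w + ((1 + \<tau>) * t) * q z"
        by algebra
      also have "(1 + \<tau>) * (1 - t) = 1" using tau by (simp add: t_def field_simps)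
      also have "(1 + \<tau>) * t = \<tau>" using tau by (simp add: t_def field_simps)
      finally show ?thesis by simp
    qed
    have lw: "h w \<ge> h x - \<tau> * inner s v"
      using lb[of w] by (simp add: w_def)
    have nw: "(norm w)\<^sup>2 = (norm x)\<^sup>2 - 2 * \<tau> * inner x v + \<tau>\<^sup>2 * (norm v)\<^sup>2"
      using norm_lin_sq[of x "- \<tau>" v] unfolding w_def by simp
    have nz: "(norm z)\<^sup>2 = (norm x)\<^sup>2 + 2 * inner x v + (norm v)\<^sup>2"
      using norm_lin_sq[of x 1 v] zv by simp
    have iden: "\<tau> * (h x + inner s v + Lp/2 * (norm v)\<^sup>2 - h z + (Lp/2 * (norm v)\<^sup>2) * \<tau>)
        = (q w + \<tau> * q z - (1 + \<tau>) * q x) + (h w - (h x - \<tau> * inner s v))"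
      unfolding q_def nw nz by (simp add: algebra_simps power2_eq_square)
    have "0 \<le> \<tau> * (h x + inner s v + Lp/2 * (norm v)\<^sup>2 - h z + (Lp/2 * (norm v)\<^sup>2) * \<tau>)"
      unfolding iden using c2 lw by simp
    hence "0 \<le> h x + inner s v + Lp/2 * (norm v)\<^sup>2 - h z + (Lp/2 * (norm v)\<^sup>2) * \<tau>"
      using tau by (simp add: zero_le_mult_iff)
    thus ?thesis by simp
  qed
  have "h x + inner s v + Lp/2 * (norm v)\<^sup>2 - h z \<ge> 0"
  proof (rule eps_lemma[where C = "Lp/2 * (norm v)\<^sup>2"])
    show "0 \<le> Lp/2 * (norm v)\<^sup>2" using Lp by simp
  qed (rule main)
  thus ?thesis by (simp add: v_def)
qed

lemma cocoercive:
  fixes h :: "'a::real_inner \<Rightarrow> real"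
  assumes lby: "\<And>w. h w \<ge> h y + inner sy (w - y)"
    and ub: "\<And>z. h z \<le> h x + inner sx (z - x) + Lp/2 * (norm (z - x))\<^sup>2" and Lp: "Lp > 0"
  shows "h x \<ge> h y + inner sy (x - y) + 1/(2*Lp) * (norm (sx - sy))\<^sup>2"
proof -
  define d where "d = sx - sy"
  define z where "z = x + (- (1/Lp)) *\<^sub>R d"
  have a1: "h z \<ge> h y + inner sy (x - y) - (1/Lp) * inner sy d"
    using lby[of z] by (simp add: z_def inner_diff_right inner_add_right algebra_simps)
  have zx: "z - x = (- (1/Lp)) *\<^sub>R d" by (simp add: z_def)
  have n1: "(norm (z - x))\<^sup>2 = (1/Lp)\<^sup>2 * (norm d)\<^sup>2" by (simp only: zx norm_scaleR_sq power2_minus)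
  have n2: "inner sx (z - x) = - (1/Lp) * inner sx d" by (simp only: zx inner_scaleR_right)
  have a2: "h z \<le> h x - (1/Lp) * inner sx d + Lp/2 * ((1/Lp)\<^sup>2 * (norm d)\<^sup>2)"
    using ub[of z] unfolding n1 n2 by simp
  have dd: "inner sx d - inner sy d = (norm d)\<^sup>2"
    by (simp add: d_def power2_norm_eq_inner inner_diff_left)
  have e: "Lp/2 * ((1/Lp)\<^sup>2 * (norm d)\<^sup>2) = (1/Lp) * (norm d)\<^sup>2 - 1/(2*Lp) * (norm d)\<^sup>2"
    using Lp by (simp add: field_simps power2_eq_square)
  have "(1/Lp) * inner sx d - (1/Lp) * inner sy d = (1/Lp) * (inner sx d - inner sy d)" by algebra
  also have "\<dots> = (1/Lp) * (norm d)\<^sup>2" unfolding dd ..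
  finally have "(1/Lp) * inner sx d - (1/Lp) * inner sy d = (1/Lp) * (norm d)\<^sup>2" .
  thus ?thesis using a1 a2 e unfolding d_def[symmetric] by linarith
qed

lemma interp:
  fixes f :: "'a::euclidean_space \<Rightarrow> real"
  assumes F: "FmuL mu (ereal Lr) f" and muL: "mu < Lr"
    and sx: "subg f mu x gx" and sy: "subg f mu y gy"
  shows "f x \<ge> f y + inner gy (x - y) + mu/2 * (norm (x - y))\<^sup>2
            + 1/(2*(Lr - mu)) * (norm (gx - gy - mu *\<^sub>R (x - y)))\<^sup>2"
proof -
  define h where "h = (\<lambda>w. f w - mu / 2 * (norm w)\<^sup>2)"
  have q0: "convex_on UNIV (\<lambda>w. Lr / 2 * (norm w)\<^sup>2 - f w)" using F by (simp add: FmuL_def)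
  have qe: "(\<lambda>w. (Lr - mu)/2 * (norm w)\<^sup>2 - h w) = (\<lambda>w. Lr / 2 * (norm w)\<^sup>2 - f w)"
    by (rule ext, unfold h_def, algebra)
  have q: "convex_on UNIV (\<lambda>w. (Lr - mu)/2 * (norm w)\<^sup>2 - h w)" unfolding qe by (rule q0)
  have lx: "h w \<ge> h x + inner (gx - mu *\<^sub>R x) (w - x)" for w
    using sx unfolding subg_h h_def by blast
  have ly: "h w \<ge> h y + inner (gy - mu *\<^sub>R y) (w - y)" for w
    using sy unfolding subg_h h_def by blast
  have ub: "h z \<le> h x + inner (gx - mu *\<^sub>R x) (z - x) + (Lr - mu)/2 * (norm (z - x))\<^sup>2" for z
    by (rule descent[OF q _ lx]) (use muL in simp)
  have co: "h x \<ge> h y + inner (gy - mu *\<^sub>R y) (x - y)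
      + 1/(2*(Lr - mu)) * (norm ((gx - mu *\<^sub>R x) - (gy - mu *\<^sub>R y)))\<^sup>2"
    by (rule cocoercive[OF ly ub]) (use muL in simp)
  have v: "(gx - mu *\<^sub>R x) - (gy - mu *\<^sub>R y) = gx - gy - mu *\<^sub>R (x - y)"
    by (simp add: algebra_simps)
  have e: "h y + inner (gy - mu *\<^sub>R y) (x - y) = f y + inner gy (x - y) + mu/2 * (norm (x - y))\<^sup>2 - mu / 2 * (norm x)\<^sup>2"
    unfolding h_def norm_diff_sq[of x y] inner_diff_left inner_scaleR_left by (simp add: algebra_simps)
  have co2: "h x \<ge> f y + inner gy (x - y) + mu/2 * (norm (x - y))\<^sup>2 - mu / 2 * (norm x)\<^sup>2
      + 1/(2*(Lr - mu)) * (norm (gx - gy - mu *\<^sub>R (x - y)))\<^sup>2"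
    using co unfolding v e .
  have hx: "h x = f x - mu / 2 * (norm x)\<^sup>2" by (simp add: h_def)
  show ?thesis using co2 unfolding hx by simp
qed

lemma quad_nonneg:
  fixes q w :: "'a::real_inner"
  assumes a: "a \<ge> 0" and c: "c \<ge> 0" and b: "b\<^sup>2 \<le> a * c"
  shows "a * (norm q)\<^sup>2 + 2 * b * inner q w + c * (norm w)\<^sup>2 \<ge> 0"
proof (cases "a = 0")
  case True
  hence "b = 0" using b by simp
  thus ?thesis using True c by simp
next
  case False
  hence ap: "a > 0" using a by simp
  have n: "(norm (a *\<^sub>R q + b *\<^sub>R w))\<^sup>2 = a\<^sup>2 * (norm q)\<^sup>2 + 2 * a * b * inner q w + b\<^sup>2 * (norm w)\<^sup>2"
    unfolding power2_norm_eq_inner inner_add_left inner_add_right inner_scaleR_left inner_scaleR_right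
      inner_commute[of w q] by (simp add: algebra_simps power2_eq_square)
  have "a * (a * (norm q)\<^sup>2 + 2 * b * inner q w + c * (norm w)\<^sup>2) =
      (norm (a *\<^sub>R q + b *\<^sub>R w))\<^sup>2 + (a * c - b\<^sup>2) * (norm w)\<^sup>2"
    unfolding n by (simp add: algebra_simps power2_eq_square)
  also have "\<dots> \<ge> 0" using b by simp
  finally show ?thesis using ap by (simp add: zero_le_mult_iff)
qed

lemma half_real:
  fixes fu fv G QW Q W al l mu s e :: real
  assumes I1: "fu \<ge> fv + G + mu/2*W + l/2*(Q - 2*mu*QW + mu\<^sup>2*W)"
    and I2: "fv \<ge> fu - G - QW + mu/2*W + l/2*(Q - 2*mu*QW + mu\<^sup>2*W)"
    and al: "al \<ge> 0"
    and quad: "((1+2*al)*l - s)*Q + 2*(-(al + (1+2*al)*l*mu))*QW + ((1+2*al)*mu*(1+l*mu) - e)*W \<ge> 0"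
  shows "fu - fv \<ge> G + s/2*Q + e/2*W"
proof -
  define rr1 where "rr1 = fu - (fv + G + mu/2*W + l/2*(Q - 2*mu*QW + mu\<^sup>2*W))"
  define rr2 where "rr2 = fv - (fu - G - QW + mu/2*W + l/2*(Q - 2*mu*QW + mu\<^sup>2*W))"
  define qq where "qq = ((1+2*al)*l - s)*Q + 2*(-(al + (1+2*al)*l*mu))*QW + ((1+2*al)*mu*(1+l*mu) - e)*W"
  have p1: "(1+al)*rr1 \<ge> 0" using I1 al by (simp add: rr1_def)
  have p2: "al*rr2 \<ge> 0" using I2 al by (simp add: rr2_def)
  have p3: "qq \<ge> 0" using quad by (simp add: qq_def)
  have iden: "fu - fv - (G + s/2*Q + e/2*W) = (1+al)*rr1 + al*rr2 + qq/2"
    unfolding rr1_def rr2_def qq_def by (simp add: field_simps power2_eq_square)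
  have "fu - fv - (G + s/2*Q + e/2*W) \<ge> 0" unfolding iden using p1 p2 p3 by simp
  thus ?thesis by simp
qed

lemma half_vec:
  fixes f :: "'a::euclidean_space \<Rightarrow> real"
  assumes F: "FmuL mu (ereal Lr) f" and muL: "mu < Lr"
    and su: "subg f mu u gu" and sv: "subg f mu v gv"
    and l: "l = 1 / (Lr - mu)" and al: "al \<ge> 0"
    and a: "(1+2*al)*l - s \<ge> 0" and c: "(1+2*al)*mu*(1+l*mu) - e \<ge> 0"
    and b: "(-(al + (1+2*al)*l*mu))\<^sup>2 \<le> ((1+2*al)*l - s) * ((1+2*al)*mu*(1+l*mu) - e)"
  shows "f u - f v \<ge> inner gv (u - v) + s/2 * (norm (gu - gv))\<^sup>2 + e/2 * (norm (u - v))\<^sup>2"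
proof -
  define w where "w = u - v"
  define q where "q = gu - gv"
  have l2: "1/(2*(Lr - mu)) = l/2" using l by simp
  have nq: "(norm (q - mu *\<^sub>R w))\<^sup>2 = (norm q)\<^sup>2 - 2*mu*inner q w + mu\<^sup>2*(norm w)\<^sup>2"
    using norm_lin_sq[of q "-mu" w] by simp
  have i1: "f u \<ge> f v + inner gv w + mu/2 * (norm w)\<^sup>2 + l/2 * (norm (q - mu *\<^sub>R w))\<^sup>2"
    using interp[OF F muL su sv] unfolding l2 w_def q_def .
  have i2': "f v \<ge> f u + inner gu (v - u) + mu/2 * (norm (v - u))\<^sup>2
      + l/2 * (norm (gv - gu - mu *\<^sub>R (v - u)))\<^sup>2"
    using interp[OF F muL sv su] unfolding l2 .
  have e1: "norm (gv - gu - mu *\<^sub>R (v - u)) = norm (q - mu *\<^sub>R w)"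
  proof -
    have "gv - gu - mu *\<^sub>R (v - u) = - (q - mu *\<^sub>R w)" by (simp add: q_def w_def algebra_simps)
    thus ?thesis by (simp only: norm_minus_cancel)
  qed
  have e2: "norm (v - u) = norm w" by (simp add: w_def norm_minus_commute)
  have e3: "inner gu (v - u) = - inner gv w - inner q w"
  proof -
    have "v - u = - w" by (simp add: w_def)
    moreover have "gu = gv + q" by (simp add: q_def)
    ultimately show ?thesis by (simp add: inner_add_left)
  qed
  have i2: "f v \<ge> f u - inner gv w - inner q w + mu/2 * (norm w)\<^sup>2 + l/2 * (norm (q - mu *\<^sub>R w))\<^sup>2"
    using i2' unfolding e1 e2 e3 by simp
  have quad: "((1+2*al)*l - s)*(norm q)\<^sup>2 + 2*(-(al + (1+2*al)*l*mu))*inner q w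
      + ((1+2*al)*mu*(1+l*mu) - e)*(norm w)\<^sup>2 \<ge> 0"
    by (rule quad_nonneg[OF a c b])
  have "f u - f v \<ge> inner gv w + s/2*(norm q)\<^sup>2 + e/2*(norm w)\<^sup>2"
    by (rule half_real[OF i1[unfolded nq] i2[unfolded nq] al quad])
  thus ?thesis by (simp add: w_def q_def)
qed

lemma regime_plus:
  fixes Lr mu s e :: real
  assumes muL: "mu < Lr" and K: "s*(Lr+mu) \<ge> 1" and sL: "s*Lr \<ge> 1" and e: "e \<le> Lr*(1 - s*Lr)"
  defines "l \<equiv> 1 / (Lr - mu)" and "al \<equiv> s*Lr - 1"
  shows "al \<ge> 0" "(1+2*al)*l - s \<ge> 0" "(1+2*al)*mu*(1+l*mu) - e \<ge> 0"
    "(-(al + (1+2*al)*l*mu))\<^sup>2 \<le> ((1+2*al)*l - s) * ((1+2*al)*mu*(1+l*mu) - e)"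
proof -
  define k where "k = s*(Lr+mu) - 1"
  have k0: "k \<ge> 0" using K by (simp add: k_def)
  have lp: "l > 0" using muL by (simp add: l_def)
  have ne: "Lr - mu \<noteq> 0" using muL by simp
  have ea: "(1+2*al)*l - s = k*l" unfolding l_def al_def k_def using ne by (simp add: field_simps)
  have eb: "-(al + (1+2*al)*l*mu) = - Lr*k*l" unfolding l_def al_def k_def using ne by (simp add: field_simps)
  have ec: "(1+2*al)*mu*(1+l*mu) - Lr*(1 - s*Lr) = Lr\<^sup>2*k*l"
    unfolding l_def al_def k_def using ne by (simp add: field_simps power2_eq_square)
  show "al \<ge> 0" using sL by (simp add: al_def)
  show a: "(1+2*al)*l - s \<ge> 0" unfolding ea using k0 lp by simp
  have c: "(1+2*al)*mu*(1+l*mu) - e \<ge> Lr\<^sup>2*k*l" using ec e by linarith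
  have "Lr\<^sup>2*k*l \<ge> 0" using k0 lp by simp
  thus "(1+2*al)*mu*(1+l*mu) - e \<ge> 0" using c by linarith
  have "(-(al + (1+2*al)*l*mu))\<^sup>2 = (k*l) * (Lr\<^sup>2*k*l)" unfolding eb by (simp add: power2_eq_square)
  also have "\<dots> \<le> ((1+2*al)*l - s) * ((1+2*al)*mu*(1+l*mu) - e)"
    unfolding ea by (rule mult_left_mono[OF c]) (use k0 lp in simp)
  finally show "(-(al + (1+2*al)*l*mu))\<^sup>2 \<le> ((1+2*al)*l - s) * ((1+2*al)*mu*(1+l*mu) - e)" .
qed

lemma regime_minus:
  fixes Lr mu s e :: real
  assumes muL: "mu < Lr" and K: "s*(Lr+mu) \<le> 1" and sm: "s*mu \<le> 0" and e: "e \<le> mu*(1 - s*mu)"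
  defines "l \<equiv> 1 / (Lr - mu)" and "al \<equiv> - s*mu"
  shows "al \<ge> 0" "(1+2*al)*l - s \<ge> 0" "(1+2*al)*mu*(1+l*mu) - e \<ge> 0"
    "(-(al + (1+2*al)*l*mu))\<^sup>2 \<le> ((1+2*al)*l - s) * ((1+2*al)*mu*(1+l*mu) - e)"
proof -
  define k where "k = 1 - s*(Lr+mu)"
  have k0: "k \<ge> 0" using K by (simp add: k_def)
  have lp: "l > 0" using muL by (simp add: l_def)
  have ne: "Lr - mu \<noteq> 0" using muL by simp
  have ea: "(1+2*al)*l - s = k*l" unfolding l_def al_def k_def using ne by (simp add: field_simps)
  have eb: "-(al + (1+2*al)*l*mu) = - mu*k*l" unfolding l_def al_def k_def using ne by (simp add: field_simps)
  have ec: "(1+2*al)*mu*(1+l*mu) - mu*(1 - s*mu) = mu\<^sup>2*k*l"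
    unfolding l_def al_def k_def using ne by (simp add: field_simps power2_eq_square)
  show "al \<ge> 0" using sm by (simp add: al_def)
  show a: "(1+2*al)*l - s \<ge> 0" unfolding ea using k0 lp by simp
  have c: "(1+2*al)*mu*(1+l*mu) - e \<ge> mu\<^sup>2*k*l" using ec e by linarith
  have "mu\<^sup>2*k*l \<ge> 0" using k0 lp by simp
  thus "(1+2*al)*mu*(1+l*mu) - e \<ge> 0" using c by linarith
  have "(-(al + (1+2*al)*l*mu))\<^sup>2 = (k*l) * (mu\<^sup>2*k*l)" unfolding eb by (simp add: power2_eq_square)
  also have "\<dots> \<le> ((1+2*al)*l - s) * ((1+2*al)*mu*(1+l*mu) - e)"
    unfolding ea by (rule mult_left_mono[OF c]) (use k0 lp in simp)
  finally show "(-(al + (1+2*al)*l*mu))\<^sup>2 \<le> ((1+2*al)*l - s) * ((1+2*al)*mu*(1+l*mu) - e)" .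
qed

definition hc :: "real \<Rightarrow> ereal \<Rightarrow> real \<Rightarrow> real \<Rightarrow> bool" where
  "hc mu L s e \<longleftrightarrow> (s = 0 \<and> e \<le> mu) \<or> (\<exists>Lr. L = ereal Lr \<and>
     ((s*(Lr+mu) \<ge> 1 \<and> s*Lr \<ge> 1 \<and> e \<le> Lr*(1 - s*Lr))
      \<or> (s*(Lr+mu) \<le> 1 \<and> s*mu \<le> 0 \<and> e \<le> mu*(1 - s*mu))
      \<or> (\<exists>l. l = 1/(Lr - mu) \<and> s \<le> l \<and> (l - s)*(mu*(1+l*mu) - e) \<ge> (l*mu)\<^sup>2 \<and> e \<le> mu*(1+l*mu))))"

lemma half_hc:
  fixes f :: "'a::euclidean_space \<Rightarrow> real"
  assumes F: "FmuL mu L f" and muL: "ereal mu < L" and H: "hc mu L s e"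
    and su: "subg f mu u gu" and sv: "subg f mu v gv"
  shows "f u - f v \<ge> inner gv (u - v) + s/2 * (norm (gu - gv))\<^sup>2 + e/2 * (norm (u - v))\<^sup>2"
proof -
  consider (inf) "s = 0" "e \<le> mu" | (fin) Lr where "L = ereal Lr"
     "(s*(Lr+mu) \<ge> 1 \<and> s*Lr \<ge> 1 \<and> e \<le> Lr*(1 - s*Lr))
      \<or> (s*(Lr+mu) \<le> 1 \<and> s*mu \<le> 0 \<and> e \<le> mu*(1 - s*mu))
      \<or> (\<exists>l. l = 1/(Lr - mu) \<and> s \<le> l \<and> (l - s)*(mu*(1+l*mu) - e) \<ge> (l*mu)\<^sup>2 \<and> e \<le> mu*(1+l*mu))"
    using H unfolding hc_def by blast
  thus ?thesis
  proof cases
    case inf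
    have "f u \<ge> f v + inner gv (u - v) + mu / 2 * (norm (u - v))\<^sup>2" using sv unfolding subg_def by blast
    moreover have "e/2 * (norm (u - v))\<^sup>2 \<le> mu/2 * (norm (u - v))\<^sup>2"
      using inf by (intro mult_right_mono) auto
    ultimately show ?thesis using inf by simp
  next
    case fin
    note F' = F[unfolded fin(1)]
    have mL: "mu < Lr" using muL fin(1) by simp
    from fin(2) consider (p) "s*(Lr+mu) \<ge> 1" "s*Lr \<ge> 1" "e \<le> Lr*(1 - s*Lr)"
      | (m) "s*(Lr+mu) \<le> 1" "s*mu \<le> 0" "e \<le> mu*(1 - s*mu)"
      | (o) "s \<le> 1/(Lr - mu)" "(1/(Lr - mu) - s)*(mu*(1+1/(Lr - mu)*mu) - e) \<ge> (1/(Lr - mu)*mu)\<^sup>2"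
            "e \<le> mu*(1+1/(Lr - mu)*mu)"
      by blast
    thus ?thesis
    proof cases
      case p
      note R = regime_plus[OF mL p]
      show ?thesis by (rule half_vec[OF F' mL su sv refl R])
    next
      case m
      note R = regime_minus[OF mL m]
      show ?thesis by (rule half_vec[OF F' mL su sv refl R])
    next
      case o
      have b: "(-(0 + (1+2*0)*(1/(Lr - mu))*mu))\<^sup>2 \<le> ((1+2*0)*(1/(Lr - mu)) - s) * ((1+2*0)*mu*(1+(1/(Lr - mu))*mu) - e)"
        using o(2) by (simp add: power2_eq_square)
      show ?thesis
        by (rule half_vec[OF F' mL su sv refl, of 0]) (use o b in auto)
    qed
  qed
qed


lemma hc_R1I:
  assumes "s \<le> 1/(Lr - mu)" "(1/(Lr - mu) - s)*(mu*(1+1/(Lr - mu)*mu) - e) \<ge> (1/(Lr - mu)*mu)\<^sup>2"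
    "e \<le> mu*(1+1/(Lr - mu)*mu)"
  shows "hc mu (ereal Lr) s e"
  unfolding hc_def using assms by blast

lemma hc_RPI:
  assumes "s*(Lr+mu) \<ge> 1" "s*Lr \<ge> 1" "e \<le> Lr*(1 - s*Lr)"
  shows "hc mu (ereal Lr) s e"
  unfolding hc_def using assms by blast

lemma hc_RMI:
  assumes "s*(Lr+mu) \<le> 1" "s*mu \<le> 0" "e \<le> mu*(1 - s*mu)"
  shows "hc mu (ereal Lr) s e"
  unfolding hc_def using assms by blast

lemma hc_infI: "e \<le> mu \<Longrightarrow> hc mu L 0 e"
  unfolding hc_def by blast

lemma prod_aux: "(d::real) \<noteq> 0 \<Longrightarrow> b \<noteq> 0 \<Longrightarrow> (m/(b*d))*(m*b/d) = (1/d*m)\<^sup>2"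
  by (simp add: power2_eq_square)

lemma GA:
  fixes La Lb ma mb :: real
  assumes h1: "Lb \<le> La" "ma < Lb" "0 \<le> ma" "mb < Lb" "0 < Lb"
    and cnd: "mb \<ge> 0 \<or> (ma > - mb \<and> - mb > 0 \<and> 1/ma + 1/mb + 1/Lb \<le> (1/La) * (2 + Lb/mb))"
  shows "(Lb - ma)/(Lb*(La - ma)) \<ge> 0" "(1/Lb)*(1 + ma*(La - Lb)/(Lb*(La - ma))) \<ge> 0"
   "hc ma (ereal La) ((Lb - ma)/(Lb*(La - ma))) (ma*(La-Lb)/(La-ma))"
   "hc mb (ereal Lb) ((1/Lb)*(1 + ma*(La - Lb)/(Lb*(La - ma)))) (-(ma*(La-Lb)/(La-ma)))"
proof -
  have d: "La - ma > 0" using h1 by simp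
  have La: "La > 0" using h1 by simp
  define sA where "sA = (Lb - ma)/(Lb*(La - ma))"
  define sB where "sB = (1/Lb)*(1 + ma*(La - Lb)/(Lb*(La - ma)))"
  define eA where "eA = ma*(La-Lb)/(La-ma)"
  define l where "l = 1/(La - ma)"
  show "(Lb - ma)/(Lb*(La - ma)) \<ge> 0" using h1 d by simp
  have q0: "ma*(La - Lb)/(Lb*(La - ma)) \<ge> 0" using h1 d by simp
  have sBL: "sB * Lb = 1 + ma*(La - Lb)/(Lb*(La - ma))" using h1 by (simp add: sB_def)
  have sBL1: "sB * Lb \<ge> 1" using sBL q0 by simp
  have sB0: "sB \<ge> 0" using q0 h1 by (simp add: sB_def)
  thus "(1/Lb)*(1 + ma*(La - Lb)/(Lb*(La - ma))) \<ge> 0" by (simp add: sB_def)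
  define dd where "dd = La - ma"
  have Ld: "La = ma + dd" by (simp add: dd_def)
  have dd0: "dd > 0" using d by (simp add: dd_def)
  have lsA: "l - sA = ma/(Lb*(La-ma))" unfolding l_def sA_def Ld using h1 dd0 by (simp add: field_simps)
  have me: "ma*(1 + l*ma) - eA = ma*Lb/(La - ma)" unfolding l_def eA_def Ld using h1 dd0 by (simp add: field_simps)
  have prod: "(l - sA)*(ma*(1+l*ma) - eA) = (l*ma)\<^sup>2"
    unfolding lsA me unfolding l_def by (rule prod_aux) (use h1 d in auto)
  have "l - sA \<ge> 0" unfolding lsA using h1 d by simp
  moreover have "ma*(1 + l*ma) - eA \<ge> 0" unfolding me using h1 d by simp
  ultimately show "hc ma (ereal La) ((Lb - ma)/(Lb*(La - ma))) (ma*(La-Lb)/(La-ma))"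
    using prod by (intro hc_R1I) (auto simp: l_def sA_def eA_def)
  have eB: "Lb*(1 - sB*Lb) = - eA" unfolding sBL eA_def using h1 d by (simp add: field_simps)
  have K: "sB*(Lb+mb) \<ge> 1"
  proof (cases "mb \<ge> 0")
    case True
    have "sB*(Lb+mb) = sB*Lb + sB*mb" by algebra
    moreover have "sB*mb \<ge> 0" using True sB0 by simp
    ultimately show ?thesis using sBL1 by linarith
  next
    case False
    hence c: "ma > - mb" "- mb > 0" "1/ma + 1/mb + 1/Lb \<le> (1/La) * (2 + Lb/mb)" using cnd by auto
    have ma0: "ma > 0" using c by simp
    define D where "D = ma*La*Lb - ma*Lb\<^sup>2 + mb*La*Lb + ma*mb*La - 2*ma*mb*Lb"
    have TS: "(1/La) * (2 + Lb/mb) - (1/ma + 1/mb + 1/Lb) = - D / (ma*mb*La*Lb)"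
      using ma0 c La h1 by (simp add: D_def field_simps power2_eq_square)
    have neg: "ma*mb*La*Lb < 0" using ma0 c La h1 by (simp add: mult_pos_neg mult_neg_pos)
    have "- D / (ma*mb*La*Lb) \<ge> 0" using TS c(3) by simp
    hence Dn: "D / (ma*mb*La*Lb) \<le> 0" by simp
    have D0: "D \<ge> 0"
    proof (rule ccontr)
      assume "\<not> D \<ge> 0"
      hence "D < 0" by simp
      hence "D / (ma*mb*La*Lb) > 0" using neg by (rule divide_neg_neg)
      thus False using Dn by simp
    qed
    have "sB*(Lb+mb) - 1 = D / (Lb\<^sup>2 * (La - ma))"
      using h1 d by (simp add: sB_def D_def field_simps power2_eq_square)
    moreover have "D / (Lb\<^sup>2 * (La - ma)) \<ge> 0" using D0 d by simp
    ultimately show ?thesis by simp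
  qed
  show "hc mb (ereal Lb) ((1/Lb)*(1 + ma*(La - Lb)/(Lb*(La - ma)))) (-(ma*(La-Lb)/(La-ma)))"
    using hc_RPI[OF K sBL1, of "- eA"] eB by (simp add: sB_def eA_def)
qed

lemma RPlim:
  fixes Lb ma mb s :: real
  assumes Lb: "0 < Lb" and ma: "0 \<le> ma" and s: "s = (Lb + ma)/Lb\<^sup>2" and mbL: "mb < Lb"
    and cnd: "mb \<ge> 0 \<or> (mb < 0 \<and> ma > 0 \<and> 1/ma + 1/mb + 1/Lb \<le> 0)"
  shows "s \<ge> 0" "hc mb (ereal Lb) s (- ma)"
proof -
  show "s \<ge> 0" unfolding s using Lb ma by simp
  have sL: "s*Lb = 1 + ma/Lb" unfolding s using Lb by (simp add: field_simps power2_eq_square)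
  have sL1: "s*Lb \<ge> 1" unfolding sL using Lb ma by simp
  have e: "- ma \<le> Lb*(1 - s*Lb)" unfolding sL using Lb by (simp add: field_simps)
  have K0: "s*(Lb+mb) - 1 = (ma*Lb + mb*Lb + ma*mb)/Lb\<^sup>2" unfolding s using Lb
    by (simp add: field_simps power2_eq_square)
  have num: "ma*Lb + mb*Lb + ma*mb \<ge> 0"
  proof (cases "mb \<ge> 0")
    case True thus ?thesis using Lb ma by simp
  next
    case False
    hence c: "mb < 0" "ma > 0" "1/ma + 1/mb + 1/Lb \<le> 0" using cnd by auto
    have "(1/ma + 1/mb + 1/Lb) * (ma*mb*Lb) = ma*Lb + mb*Lb + ma*mb" using c Lb by (simp add: field_simps)
    moreover have "ma*mb*Lb < 0" using c Lb by (simp add: mult_pos_neg mult_neg_pos)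
    ultimately show ?thesis using c(3) by (metis mult_nonpos_nonpos less_imp_le)
  qed
  have "(ma*Lb + mb*Lb + ma*mb)/Lb\<^sup>2 \<ge> 0" using num by simp
  hence K: "s*(Lb+mb) \<ge> 1" using K0 by simp
  show "hc mb (ereal Lb) s (- ma)" by (rule hc_RPI[OF K sL1 e])
qed

lemma R1S:
  fixes La ma S :: real
  assumes ma: "ma > 0" and La: "La > ma" and S: "S \<le> 0"
  shows "((1/La)*S)/(S - 1/La) \<ge> 0" "hc ma (ereal La) (((1/La)*S)/(S - 1/La)) (ma/(1 - ma*S))"
proof -
  define dd where "dd = La - ma"
  have Ld: "La = ma + dd" by (simp add: dd_def)
  have dd0: "dd > 0" using La by (simp add: dd_def)
  have La0: "La > 0" using ma La by simp
  have n1: "S - 1/La < 0" using S La0 by (simp add: diff_less_0_iff_less) (smt (verit) divide_pos_pos)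
  show "((1/La)*S)/(S - 1/La) \<ge> 0"
  proof (rule divide_nonpos_neg)
    show "1/La*S \<le> 0" using S La0 by (simp add: divide_nonpos_pos)
  qed (rule n1)
  define s where "s = ((1/La)*S)/(S - 1/La)"
  define e where "e = ma/(1 - ma*S)"
  have p1: "1 - ma*S > 0" using ma S by (smt (verit) mult_nonneg_nonpos)
  have p2: "1 - La*S > 0" using La0 S by (smt (verit) mult_nonneg_nonpos)
  have ls: "1/(La - ma) - s = (1 - ma*S)/((La - ma)*(1 - La*S))"
  proof -
    define Q where "Q = 1 - La*S"
    have Q0: "Q > 0" using p2 by (simp add: Q_def)
    have s1: "s = - (S/Q)" unfolding s_def Q_def using La0 n1 p2 by (simp add: field_simps)
    have "1/dd - s = 1/dd + S/Q" unfolding s1 by simp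
    also have "\<dots> = (Q + S*dd)/(dd*Q)" using dd0 Q0 by (simp add: field_simps)
    also have "Q + S*dd = 1 - ma*S" unfolding Q_def dd_def by (simp add: algebra_simps)
    finally show ?thesis by (simp add: dd_def Q_def)
  qed
  have me: "ma*(1 + 1/(La - ma)*ma) - e = ma\<^sup>2*(1 - La*S)/((La - ma)*(1 - ma*S))"
    unfolding e_def Ld using dd0 La0 p1 p2 unfolding Ld by (simp add: field_simps power2_eq_square)
  have gen: "((1 - m*S)/(d*(1 - L*S))) * (m\<^sup>2*(1 - L*S)/(d*(1 - m*S))) = (1/d*m)\<^sup>2"
    if "d \<noteq> 0" "1 - L*S \<noteq> 0" "1 - m*S \<noteq> 0" for d L m :: real
    using that by (simp add: power2_eq_square)
  have prod: "(1/(La - ma) - s)*(ma*(1 + 1/(La - ma)*ma) - e) = (1/(La - ma)*ma)\<^sup>2"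
    unfolding ls me by (rule gen) (use La p1 p2 in auto)
  have "1/(La - ma) - s \<ge> 0" unfolding ls using La p1 p2 by simp
  moreover have "ma*(1 + 1/(La - ma)*ma) - e \<ge> 0" unfolding me using La p1 p2 by simp
  ultimately show "hc ma (ereal La) (((1/La)*S)/(S - 1/La)) (ma/(1 - ma*S))"
    using prod unfolding s_def[symmetric] e_def[symmetric] by (intro hc_R1I) auto
qed

lemma RMD3:
  fixes Lb mb :: real
  assumes mb: "mb < 0" and Lb: "Lb + mb > 0"
  shows "1/(Lb+mb) \<ge> 0" "hc mb (ereal Lb) (1/(Lb+mb)) (mb*Lb/(Lb+mb))"
proof -
  show "1/(Lb+mb) \<ge> 0" using Lb by simp
  have a: "1/(Lb+mb)*(Lb+mb) \<le> 1" using Lb by simp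
  have b: "1/(Lb+mb)*mb \<le> 0" using Lb mb by (simp add: divide_nonpos_pos)
  have c: "mb*Lb/(Lb+mb) \<le> mb*(1 - 1/(Lb+mb)*mb)" using Lb by (simp add: field_simps)
  show "hc mb (ereal Lb) (1/(Lb+mb)) (mb*Lb/(Lb+mb))" by (rule hc_RMI[OF a b c])
qed

lemma div_aux: "(a::real) \<noteq> 0 \<Longrightarrow> c \<noteq> 0 \<Longrightarrow> d \<noteq> 0 \<Longrightarrow> a/(- a*c/d) = - (d/c)"
  by (simp add: field_simps)

lemma sumD3:
  fixes ma mb Lb S :: real
  assumes "ma > 0" "mb < 0" "Lb > 0" "Lb + mb > 0" "S = 1/ma + 1/mb + 1/Lb"
  shows "ma/(1 - ma*S) + mb*Lb/(Lb+mb) = 0"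
proof -
  have h: "1 - ma*S = - ma*(Lb + mb)/(mb*Lb)" using assms by (simp add: field_simps)
  have "ma/(1 - ma*S) = ma/(- ma*(Lb + mb)/(mb*Lb))" by (simp only: h)
  also have "\<dots> = - (mb*Lb/(Lb+mb))" by (rule div_aux) (use assms in auto)
  finally show ?thesis by simp
qed

lemma sumD3inf:
  fixes ma mb S :: real
  assumes "ma > 0" "mb < 0" "S = 1/ma + 1/mb"
  shows "ma/(1 - ma*S) + mb = 0"
proof -
  have h: "1 - ma*S = - ma/mb" using assms by (simp add: field_simps)
  have "ma/(1 - ma*S) = ma/(- ma/mb)" by (simp only: h)
  also have "\<dots> = - mb" using assms by (simp add: field_simps)
  finally show ?thesis by simp
qed

lemma sumD3infA:
  fixes ma mb Lb :: real
  assumes "ma > 0" "mb < 0" "Lb > 0" "Lb + mb > 0" "1/ma + 1/mb + 1/Lb \<le> 0"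
  shows "ma + mb*Lb/(Lb+mb) \<ge> 0"
proof -
  have h1: "(1/ma + 1/mb + 1/Lb) * (ma*mb*Lb) = ma*Lb + mb*Lb + ma*mb" using assms by (simp add: field_simps)
  have h2: "ma + mb*Lb/(Lb+mb) = (ma*Lb + mb*Lb + ma*mb)/(Lb+mb)" using assms by (simp add: field_simps)
  have "ma*mb*Lb < 0" using assms by (simp add: mult_pos_neg mult_neg_pos)
  hence "(1/ma + 1/mb + 1/Lb) * (ma*mb*Lb) \<ge> 0" using assms(5) by (simp add: mult_nonpos_nonpos)
  hence "ma*Lb + mb*Lb + ma*mb \<ge> 0" unfolding h1 .
  thus ?thesis unfolding h2 using assms by simp
qed

lemma D5lem:
  fixes Lb ma mb :: real
  assumes "ma > - mb" "- mb > 0" "Lb > 0" "1/ma + 1/mb + 1/Lb > 0"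
  shows "(ma + mb)/mb\<^sup>2 \<ge> 0" "hc mb (ereal Lb) ((ma + mb)/mb\<^sup>2) (- ma)"
proof -
  have ma: "ma > 0" using assms by simp
  show "(ma + mb)/mb\<^sup>2 \<ge> 0" using assms by simp
  have neg: "ma*mb*Lb < 0" using assms ma by (simp add: mult_pos_neg mult_neg_pos)
  have "(1/ma + 1/mb + 1/Lb) * (ma*mb*Lb) = ma*Lb + mb*Lb + ma*mb" using assms ma by (simp add: field_simps)
  hence num: "ma*Lb + mb*Lb + ma*mb < 0" using neg assms(4) by (metis mult_pos_neg)
  have a: "(ma + mb)/mb\<^sup>2*(Lb+mb) \<le> 1"
  proof -
    have "(ma + mb)/mb\<^sup>2*(Lb+mb) - 1 = (ma*Lb + mb*Lb + ma*mb)/mb\<^sup>2" using assms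
      by (simp add: field_simps power2_eq_square)
    moreover have "(ma*Lb + mb*Lb + ma*mb)/mb\<^sup>2 \<le> 0"
      by (rule divide_nonpos_pos) (use num assms in auto)
    ultimately show ?thesis by simp
  qed
  have b1: "(ma + mb)/mb\<^sup>2*mb = (ma + mb)/mb" using assms by (simp add: power2_eq_square)
  have b2: "(ma + mb)/mb \<le> 0" by (rule divide_nonneg_neg) (use assms in auto)
  have b: "(ma + mb)/mb\<^sup>2*mb \<le> 0" using b1 b2 by simp
  have c: "- ma \<le> mb*(1 - (ma + mb)/mb\<^sup>2*mb)" using assms by (simp add: field_simps power2_eq_square)
  show "hc mb (ereal Lb) ((ma + mb)/mb\<^sup>2) (- ma)" by (rule hc_RMI[OF a b c])
qed


lemma lim_inv:
  fixes f g :: "real \<Rightarrow> real"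
  assumes g: "isCont g 0" and g0: "g 0 = c" and ev: "\<And>t. t > T \<Longrightarrow> f t = g (1/t)"
  shows "(f \<longlongrightarrow> c) at_top"
proof -
  have i: "((\<lambda>t::real. 1/t) \<longlongrightarrow> 0) at_top"
    using tendsto_inverse_0_at_top[OF filterlim_ident] by (simp add: inverse_eq_divide)
  have "((\<lambda>t. g (1/t)) \<longlongrightarrow> g 0) at_top" by (rule isCont_tendsto_compose[OF g i])
  moreover have "eventually (\<lambda>t. g (1/t) = f t) at_top"
    using ev by (intro eventually_at_top_linorderI[of "T + 1"]) auto
  ultimately show ?thesis unfolding g0 by (rule Lim_transform_eventually)
qed

lemma ext_fin: "ext_val e (ereal a) (ereal b) = ereal (e a b)"
  by (simp add: ext_val_def)

lemma ext_inf1: "((\<lambda>t. e t b) \<longlongrightarrow> c) at_top \<Longrightarrow> ext_val e \<infinity> (ereal b) = ereal c"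
  unfolding ext_val_def by (simp add: tendsto_Lim)

lemma ext_inf2: "((\<lambda>t. e a t) \<longlongrightarrow> c) at_top \<Longrightarrow> ext_val e (ereal a) \<infinity> = ereal c"
  unfolding ext_val_def by (simp add: tendsto_Lim)

lemma LA: fixes a m :: real assumes "a \<noteq> 0"
  shows "((\<lambda>t. (a - m)/(a*(t - m))) \<longlongrightarrow> 0) at_top"
proof (rule lim_inv[where g = "\<lambda>u. (a - m)*u/(a*(1 - m*u))" and T = "\<bar>m\<bar> + 1"])
  show "isCont (\<lambda>u. (a - m)*u/(a*(1 - m*u))) 0" by (intro continuous_intros) (use assms in auto)
  fix t :: real assume t: "t > \<bar>m\<bar> + 1"
  hence t0: "t \<noteq> 0" "t - m \<noteq> 0" by auto
  show "(a - m)/(a*(t - m)) = (a - m)*(1/t)/(a*(1 - m*(1/t)))"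
    using t0 assms by (simp add: field_simps)
qed simp

lemma LB: fixes a m :: real assumes "a \<noteq> 0"
  shows "((\<lambda>t. (1/a)*(1 + m*(t - a)/(a*(t - m)))) \<longlongrightarrow> (1/a)*(1 + m/a)) at_top"
proof (rule lim_inv[where g = "\<lambda>u. (1/a)*(1 + m*(1 - a*u)/(a*(1 - m*u)))" and T = "\<bar>m\<bar> + 1"])
  show "isCont (\<lambda>u. (1/a)*(1 + m*(1 - a*u)/(a*(1 - m*u)))) 0" by (intro continuous_intros) (use assms in auto)
  fix t :: real assume t: "t > \<bar>m\<bar> + 1"
  hence t0: "t \<noteq> 0" "t - m \<noteq> 0" by auto
  have "m*(t - a)/(a*(t - m)) = m*(1 - a*(1/t))/(a*(1 - m*(1/t)))"
    using t0 assms by (simp add: field_simps)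
  thus "(1/a)*(1 + m*(t - a)/(a*(t - m))) = (1/a)*(1 + m*(1 - a*(1/t))/(a*(1 - m*(1/t))))" by simp
qed simp

lemma LC: fixes S :: real
  shows "((\<lambda>t. (1/t*S)/(S - 1/t)) \<longlongrightarrow> 0) at_top"
proof (cases "S = 0")
  case True thus ?thesis by simp
next
  case False
  show ?thesis
  proof (rule lim_inv[where g = "\<lambda>u. (u*S)/(S - u)" and T = 1])
    show "isCont (\<lambda>u. (u*S)/(S - u)) 0" by (intro continuous_intros) (use False in auto)
  qed simp_all
qed

lemma LD: fixes a l :: real assumes "a - 1/l \<noteq> 0"
  shows "((\<lambda>t. (1/l*(a + 1/t))/((a + 1/t) - 1/l)) \<longlongrightarrow> (1/l*a)/(a - 1/l)) at_top"
proof (rule lim_inv[where g = "\<lambda>u. (1/l*(a + u))/((a + u) - 1/l)" and T = 1])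
  show "isCont (\<lambda>u. (1/l*(a + u))/((a + u) - 1/l)) 0" by (intro continuous_intros) (use assms in auto)
qed simp_all

lemma LE: fixes m :: real shows "((\<lambda>t. 1/(t + m)) \<longlongrightarrow> 0) at_top"
proof (rule lim_inv[where g = "\<lambda>u. u/(1 + m*u)" and T = "\<bar>m\<bar> + 1"])
  show "isCont (\<lambda>u. u/(1 + m*u)) 0" by (intro continuous_intros) auto
  fix t :: real assume t: "t > \<bar>m\<bar> + 1"
  hence t0: "t \<noteq> 0" "t + m \<noteq> 0" by auto
  show "1/(t + m) = (1/t)/(1 + m*(1/t))" using t0 by (simp add: field_simps)
qed simp

lemma LF: fixes c :: real shows "((\<lambda>t. 1/t * c) \<longlongrightarrow> 0) at_top"
  by (rule lim_inv[where g = "\<lambda>u. u * c" and T = 1]) (auto intro!: continuous_intros)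

lemma LG: fixes a :: real shows "((\<lambda>t. a + 1/t) \<longlongrightarrow> a) at_top"
  by (rule lim_inv[where g = "\<lambda>u. a + u" and T = 1]) (auto intro!: continuous_intros)


definition cert :: "nat \<Rightarrow> ereal \<Rightarrow> ereal \<Rightarrow> real \<Rightarrow> real \<Rightarrow> bool" where
  "cert i L1 L2 mu1 mu2 \<longleftrightarrow> (\<exists>sg sp e1 e2. p_const i L1 L2 mu1 mu2 = ereal (sg + sp) \<and> sg \<ge> 0 \<and> sp \<ge> 0
     \<and> hc mu1 L1 sg e1 \<and> hc mu2 L2 sp e2 \<and> e1 + e2 \<ge> 0)"

lemma certI:
  assumes "ext_val (sigma_f i mu1 mu2) L1 L2 = ereal sg" "ext_val (sigmap_f i mu1 mu2) L1 L2 = ereal sp"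
    "sg \<ge> 0" "sp \<ge> 0" "hc mu1 L1 sg e1" "hc mu2 L2 sp e2" "e1 + e2 \<ge> 0"
  shows "cert i L1 L2 mu1 mu2"
  unfolding cert_def p_const_def using assms by (intro exI[of _ sg] exI[of _ sp] exI[of _ e1] exI[of _ e2]) auto

lemma certI_fin:
  assumes "sigma_f i mu1 mu2 l1 l2 = sg" "sigmap_f i mu1 mu2 l1 l2 = sp"
    "sg \<ge> 0" "sp \<ge> 0" "hc mu1 (ereal l1) sg e1" "hc mu2 (ereal l2) sp e2" "e1 + e2 \<ge> 0"
  shows "cert i (ereal l1) (ereal l2) mu1 mu2"
  by (rule certI) (use assms in \<open>simp_all add: ext_fin\<close>)

lemma S1e: "S1f mu1 mu2 a b = 1/mu1 + 1/mu2 + 1/b" by (simp add: S1f_def)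
lemma S2e: "S2f mu1 mu2 a b = 1/mu1 + 1/mu2 + 1/a" by (simp add: S2f_def)
lemma T1e: "T1f mu1 mu2 a b = (1/a) * (2 + b/mu2)" by (simp add: T1f_def)
lemma T2e: "T2f mu1 mu2 a b = (1/b) * (2 + a/mu1)" by (simp add: T2f_def)

lemma cert_fin:
  fixes l1 l2 mu1 mu2 :: real
  assumes l1: "l1 > 0" and l2: "l2 > 0" and m1: "mu1 < l1" and m2: "mu2 < l2"
    and musum: "mu1 + mu2 > 0 \<or> (mu1 = 0 \<and> mu2 = 0)"
    and i: "i \<in> {1..8}" and D: "inDom i (ereal l1) (ereal l2) mu1 mu2"
  shows "cert i (ereal l1) (ereal l2) mu1 mu2"
proof -
  let ?S1 = "S1f mu1 mu2 l1 l2" and ?S2 = "S2f mu1 mu2 l1 l2"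
  let ?T1 = "T1f mu1 mu2 l1 l2" and ?T2 = "T2f mu1 mu2 l1 l2"
  have iv: "i = 1 \<or> i = 2 \<or> i = 3 \<or> i = 4 \<or> i = 5 \<or> i = 6 \<or> i = 7 \<or> i = 8" using i by auto
  note sf = ext_fin[of "sigma_f i mu1 mu2" l1 l2] ext_fin[of "sigmap_f i mu1 mu2" l1 l2]
  show ?thesis
  proof -
    { assume i1: "i = 1"
      have c: "l2 \<le> l1" "mu1 < l2" "0 \<le> mu1" "mu2 \<ge> 0 \<or> (mu1 > - mu2 \<and> - mu2 > 0 \<and> ?S1 \<le> ?T1)"
        using D unfolding i1 by (auto simp: inDom_def ext_fin Let_def)
      note G = GA[OF c(1-3) m2 l2 c(4)[unfolded S1e T1e]]
      have "cert 1 (ereal l1) (ereal l2) mu1 mu2"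
        by (rule certI_fin[OF _ _ G(1,2,3,4)]) (simp_all add: sigma_f_def sigmap_f_def)
      hence ?thesis using i1 by simp }
    moreover
    { assume i2: "i = 2"
      have c: "l1 \<le> l2" "mu2 < l1" "0 \<le> mu2" "mu1 \<ge> 0 \<or> (mu2 > - mu1 \<and> - mu1 > 0 \<and> ?S2 \<le> ?T2)"
        using D unfolding i2 by (auto simp: inDom_def ext_fin Let_def)
      have c4: "mu1 \<ge> 0 \<or> (mu2 > - mu1 \<and> - mu1 > 0 \<and> 1/mu2 + 1/mu1 + 1/l1 \<le> (1/l2) * (2 + l1/mu1))"
        using c(4) unfolding S2e T2e by (simp add: add.commute add.left_commute)
      note G = GA[OF c(1-3) m1 l1 c4]
      have "cert 2 (ereal l1) (ereal l2) mu1 mu2"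
        by (rule certI_fin[OF _ _ G(2,1,4,3)]) (simp_all add: sigma_f_def sigmap_f_def)
      hence ?thesis using i2 by simp }
    moreover
    { assume i3: "i = 3"
      have c: "mu1 > - mu2" "- mu2 > 0" "l2 > mu1" "l1 > mu2" "?S1 \<le> 0"
        using D unfolding i3 by (auto simp: inDom_def ext_fin Let_def)
      have ma: "mu1 > 0" using c by simp
      have S0: "1/mu1 + 1/mu2 + 1/l2 \<le> 0" using c(5) unfolding S1e .
      note R = R1S[OF ma m1 S0]
      note M = RMD3[of mu2 l2]
      have lb: "l2 + mu2 > 0" using c by simp
      have sm: "mu1/(1 - mu1*(1/mu1 + 1/mu2 + 1/l2)) + mu2*l2/(l2+mu2) = 0"
        by (rule sumD3) (use c lb ma l2 in auto)
      have "cert 3 (ereal l1) (ereal l2) mu1 mu2"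
        by (rule certI_fin[OF _ _ R(1) M(1) R(2) M(2)]) (use c lb sm in \<open>simp_all add: sigma_f_def sigmap_f_def S1e\<close>)
      hence ?thesis using i3 by simp }
    moreover
    { assume i4: "i = 4"
      have c: "mu2 > - mu1" "- mu1 > 0" "l2 > mu1" "l1 > mu2" "?S2 \<le> 0"
        using D unfolding i4 by (auto simp: inDom_def ext_fin Let_def)
      have ma: "mu2 > 0" using c by simp
      have S0: "1/mu1 + 1/mu2 + 1/l1 \<le> 0" using c(5) unfolding S2e .
      note R = R1S[OF ma m2 S0]
      note M = RMD3[of mu1 l1]
      have lb: "l1 + mu1 > 0" using c by simp
      have sm: "mu2/(1 - mu2*(1/mu1 + 1/mu2 + 1/l1)) + mu1*l1/(l1+mu1) = 0"
        by (rule sumD3) (use c lb ma l1 in auto)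
      have "cert 4 (ereal l1) (ereal l2) mu1 mu2"
        by (rule certI_fin[OF _ _ M(1) R(1) M(2) R(2)]) (use c lb sm in \<open>simp_all add: sigma_f_def sigmap_f_def S2e add.commute\<close>)
      hence ?thesis using i4 by simp }
    moreover
    { assume i5: "i = 5"
      have c: "mu1 > - mu2" "- mu2 > 0" "0 < ?S1"
        using D unfolding i5 by (auto simp: inDom_def ext_fin Let_def)
      note P = D5lem[OF c(1,2) l2 c(3)[unfolded S1e]]
      have "cert 5 (ereal l1) (ereal l2) mu1 mu2"
        by (rule certI_fin[OF _ _ _ P(1) hc_infI[of mu1 mu1] P(2)]) (simp_all add: sigma_f_def sigmap_f_def)
      hence ?thesis using i5 by simp }
    moreover
    { assume i6: "i = 6"
      have c: "mu2 > - mu1" "- mu1 > 0" "0 < ?S2"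
        using D unfolding i6 by (auto simp: inDom_def ext_fin Let_def)
      have c3: "1/mu2 + 1/mu1 + 1/l1 > 0" using c(3) unfolding S2e by (simp add: add.commute)
      note P = D5lem[OF c(1,2) l1 c3]
      have "cert 6 (ereal l1) (ereal l2) mu1 mu2"
        by (rule certI_fin[OF _ _ P(1) _ P(2) hc_infI[of mu2 mu2]]) (simp_all add: sigma_f_def sigmap_f_def add.commute)
      hence ?thesis using i6 by simp }
    moreover
    { assume i7: "i = 7"
      have c: "l1 > mu1" "mu1 > l2" "mu2 \<ge> 0 \<or> (mu2 < 0 \<and> ?S1 \<le> 0)"
        using D unfolding i7 by (auto simp: inDom_def ext_fin Let_def)
      have c3: "mu2 \<ge> 0 \<or> (mu2 < 0 \<and> mu1 > 0 \<and> 1/mu1 + 1/mu2 + 1/l2 \<le> 0)"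
        using c(3) c(2) l2 unfolding S1e by auto
      note P = RPlim[OF l2 _ refl m2 c3]
      have "cert 7 (ereal l1) (ereal l2) mu1 mu2"
        by (rule certI_fin[OF _ _ _ P(1) hc_infI[of mu1 mu1] P(2)]) (use c l2 in \<open>simp_all add: sigma_f_def sigmap_f_def\<close>)
      hence ?thesis using i7 by simp }
    moreover
    { assume i8: "i = 8"
      have c: "l2 > mu2" "mu2 > l1" "mu1 \<ge> 0 \<or> (mu1 < 0 \<and> ?S2 \<le> 0)"
        using D unfolding i8 by (auto simp: inDom_def ext_fin Let_def)
      have c3: "mu1 \<ge> 0 \<or> (mu1 < 0 \<and> mu2 > 0 \<and> 1/mu2 + 1/mu1 + 1/l1 \<le> 0)"
        using c(3) c(2) l1 unfolding S2e by (auto simp: add.commute)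
      note P = RPlim[OF l1 _ refl m1 c3]
      have "cert 8 (ereal l1) (ereal l2) mu1 mu2"
        by (rule certI_fin[OF _ _ P(1) _ P(2) hc_infI[of mu2 mu2]]) (use c l1 in \<open>simp_all add: sigma_f_def sigmap_f_def\<close>)
      hence ?thesis using i8 by simp }
    ultimately show ?thesis using iv by blast
  qed
qed

lemma ext_inf1': "(\<And>t. e t b = h t) \<Longrightarrow> (h \<longlongrightarrow> c) at_top \<Longrightarrow> ext_val e \<infinity> (ereal b) = ereal c"
  by (rule ext_inf1) simp
lemma ext_inf2': "(\<And>t. e a t = h t) \<Longrightarrow> (h \<longlongrightarrow> c) at_top \<Longrightarrow> ext_val e (ereal a) \<infinity> = ereal c"
  by (rule ext_inf2) simp

lemma neg_inv_sum:
  fixes ma mb :: real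
  assumes "ma > - mb" "- mb > 0"
  shows "1/ma + 1/mb < 0"
proof -
  have "1/ma + 1/mb = (ma + mb)/(ma*mb)" using assms by (simp add: field_simps)
  moreover have "ma*mb < 0" using assms by (simp add: mult_pos_neg)
  ultimately show ?thesis using assms by (simp add: divide_pos_neg)
qed

lemma certI_inf1:
  assumes "ext_val (sigma_f i mu1 mu2) \<infinity> (ereal l2) = ereal sg" "ext_val (sigmap_f i mu1 mu2) \<infinity> (ereal l2) = ereal sp"
    "sg \<ge> 0" "sp \<ge> 0" "hc mu1 \<infinity> sg e1" "hc mu2 (ereal l2) sp e2" "e1 + e2 \<ge> 0"
  shows "cert i \<infinity> (ereal l2) mu1 mu2"
  by (rule certI[OF assms])

lemma certI_inf2:
  assumes "ext_val (sigma_f i mu1 mu2) (ereal l1) \<infinity> = ereal sg" "ext_val (sigmap_f i mu1 mu2) (ereal l1) \<infinity> = ereal sp"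
    "sg \<ge> 0" "sp \<ge> 0" "hc mu1 (ereal l1) sg e1" "hc mu2 \<infinity> sp e2" "e1 + e2 \<ge> 0"
  shows "cert i (ereal l1) \<infinity> mu1 mu2"
  by (rule certI[OF assms])

lemma cert_inf1:
  fixes l2 mu1 mu2 :: real
  assumes l2: "l2 > 0" and m2: "mu2 < l2"
    and i: "i \<in> {1..8}" and D: "inDom i \<infinity> (ereal l2) mu1 mu2"
  shows "cert i \<infinity> (ereal l2) mu1 mu2"
proof -
  have eS1: "ext_val (S1f mu1 mu2) \<infinity> (ereal l2) = ereal (1/mu1 + 1/mu2 + 1/l2)"
    by (rule ext_inf1'[where h = "\<lambda>t. 1/mu1 + 1/mu2 + 1/l2"]) (simp_all add: S1f_def)
  have eS2: "ext_val (S2f mu1 mu2) \<infinity> (ereal l2) = ereal (1/mu1 + 1/mu2)"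
    by (rule ext_inf1'[where h = "\<lambda>t. (1/mu1 + 1/mu2) + 1/t"]) (simp_all add: S2f_def LG)
  have eT1: "ext_val (T1f mu1 mu2) \<infinity> (ereal l2) = ereal 0"
    by (rule ext_inf1'[where h = "\<lambda>t. 1/t * (2 + l2/mu2)"]) (simp add: T1f_def, rule LF)
  have iv: "i = 1 \<or> i = 2 \<or> i = 3 \<or> i = 4 \<or> i = 5 \<or> i = 6 \<or> i = 7 \<or> i = 8" using i by auto
  show ?thesis
  proof -
    { assume i1: "i = 1"
      have c: "mu1 < l2" "0 \<le> mu1" "mu2 \<ge> 0 \<or> (mu1 > - mu2 \<and> - mu2 > 0 \<and> 1/mu1 + 1/mu2 + 1/l2 \<le> 0)"
        using D unfolding i1 by (auto simp: inDom_def Let_def eS1 eS2 eT1)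
      have c3: "mu2 \<ge> 0 \<or> (mu2 < 0 \<and> mu1 > 0 \<and> 1/mu1 + 1/mu2 + 1/l2 \<le> 0)" using c(3) by auto
      have seq: "(1/l2)*(1 + mu1/l2) = (l2 + mu1)/l2\<^sup>2" using l2 by (simp add: field_simps power2_eq_square)
      note P = RPlim[OF l2 c(2) seq m2 c3]
      have e1: "ext_val (sigma_f 1 mu1 mu2) \<infinity> (ereal l2) = ereal 0"
        by (rule ext_inf1'[where h = "\<lambda>t. (l2 - mu1)/(l2*(t - mu1))"]) (simp add: sigma_f_def, rule LA, use l2 in simp)
      have e2: "ext_val (sigmap_f 1 mu1 mu2) \<infinity> (ereal l2) = ereal ((1/l2)*(1 + mu1/l2))"
        by (rule ext_inf1'[where h = "\<lambda>t. (1/l2)*(1 + mu1*(t - l2)/(l2*(t - mu1)))"]) (simp add: sigmap_f_def, rule LB, use l2 in simp)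
      have "cert 1 \<infinity> (ereal l2) mu1 mu2"
        by (rule certI_inf1[OF e1 e2 _ P(1) hc_infI[of mu1 mu1] P(2)]) simp_all
      hence ?thesis using i1 by simp }
    moreover
    { assume i2: "i = 2"
      have False using D unfolding i2 by (auto simp: inDom_def Let_def)
      hence ?thesis .. }
    moreover
    { assume i3: "i = 3"
      have c: "mu1 > - mu2" "- mu2 > 0" "l2 > mu1" "1/mu1 + 1/mu2 + 1/l2 \<le> 0"
        using D unfolding i3 by (auto simp: inDom_def Let_def eS1 eS2 eT1)
      have lb: "l2 + mu2 > 0" "mu2 < 0" "mu1 > 0" using c by auto
      note M = RMD3[OF lb(2) lb(1)]
      have e1: "ext_val (sigma_f 3 mu1 mu2) \<infinity> (ereal l2) = ereal 0"
        by (rule ext_inf1'[where h = "\<lambda>t. (1/t*(1/mu1 + 1/mu2 + 1/l2))/((1/mu1 + 1/mu2 + 1/l2) - 1/t)"])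
          (simp add: sigma_f_def S1f_def, rule LC)
      have e2: "ext_val (sigmap_f 3 mu1 mu2) \<infinity> (ereal l2) = ereal (1/(l2+mu2))"
        by (rule ext_inf1'[where h = "\<lambda>t. 1/(l2+mu2)"]) (simp_all add: sigmap_f_def)
      have sm: "mu1 + mu2*l2/(l2+mu2) \<ge> 0" by (rule sumD3infA) (use lb l2 c in auto)
      have "cert 3 \<infinity> (ereal l2) mu1 mu2"
        by (rule certI_inf1[OF e1 e2 _ M(1) hc_infI[of mu1 mu1] M(2)]) (use sm in simp_all)
      hence ?thesis using i3 by simp }
    moreover
    { assume i4: "i = 4"
      have c: "mu2 > - mu1" "- mu1 > 0" "l2 > mu1" "1/mu1 + 1/mu2 \<le> 0"
        using D unfolding i4 by (auto simp: inDom_def Let_def eS1 eS2 eT1)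
      have ma: "mu2 > 0" using c by simp
      note R = R1S[OF ma m2 c(4)]
      have ne: "(1/mu1 + 1/mu2) - 1/l2 \<noteq> 0" using c(4) l2 by (smt (verit) divide_pos_pos)
      have e1: "ext_val (sigma_f 4 mu1 mu2) \<infinity> (ereal l2) = ereal 0"
        by (rule ext_inf1'[where h = "\<lambda>t. 1/(t + mu1)"]) (simp add: sigma_f_def, rule LE)
      have e2: "ext_val (sigmap_f 4 mu1 mu2) \<infinity> (ereal l2) = ereal (((1/l2)*(1/mu1 + 1/mu2))/((1/mu1 + 1/mu2) - 1/l2))"
        by (rule ext_inf1'[where h = "\<lambda>t. (1/l2*((1/mu1 + 1/mu2) + 1/t))/(((1/mu1 + 1/mu2) + 1/t) - 1/l2)"])
          (simp add: sigmap_f_def S2f_def, rule LD[OF ne])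
      have sm: "mu2/(1 - mu2*(1/mu1 + 1/mu2)) + mu1 = 0"
        by (rule sumD3inf) (use c ma in \<open>auto simp: add.commute\<close>)
      have "cert 4 \<infinity> (ereal l2) mu1 mu2"
        by (rule certI_inf1[OF e1 e2 _ R(1) hc_infI[of mu1 mu1] R(2)]) (use sm in simp_all)
      hence ?thesis using i4 by simp }
    moreover
    { assume i5: "i = 5"
      have c: "mu1 > - mu2" "- mu2 > 0" "0 < 1/mu1 + 1/mu2 + 1/l2"
        using D unfolding i5 by (auto simp: inDom_def Let_def eS1 eS2 eT1)
      note P = D5lem[OF c(1,2) l2 c(3)]
      have e1: "ext_val (sigma_f 5 mu1 mu2) \<infinity> (ereal l2) = ereal 0"
        by (rule ext_inf1'[where h = "\<lambda>t. 0"]) (simp_all add: sigma_f_def)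
      have e2: "ext_val (sigmap_f 5 mu1 mu2) \<infinity> (ereal l2) = ereal ((mu1 + mu2)/mu2\<^sup>2)"
        by (rule ext_inf1'[where h = "\<lambda>t. (mu1 + mu2)/mu2\<^sup>2"]) (simp_all add: sigmap_f_def)
      have "cert 5 \<infinity> (ereal l2) mu1 mu2"
        by (rule certI_inf1[OF e1 e2 _ P(1) hc_infI[of mu1 mu1] P(2)]) simp_all
      hence ?thesis using i5 by simp }
    moreover
    { assume i6: "i = 6"
      have c: "mu2 > - mu1" "- mu1 > 0" "0 < 1/mu1 + 1/mu2"
        using D unfolding i6 by (auto simp: inDom_def Let_def eS1 eS2 eT1)
      have "1/mu2 + 1/mu1 < 0" by (rule neg_inv_sum) (use c in auto)
      hence False using c(3) by simp
      hence ?thesis .. }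
    moreover
    { assume i7: "i = 7"
      have c: "mu1 > l2" "mu2 \<ge> 0 \<or> (mu2 < 0 \<and> 1/mu1 + 1/mu2 + 1/l2 \<le> 0)"
        using D unfolding i7 by (auto simp: inDom_def Let_def eS1 eS2 eT1)
      have c3: "mu2 \<ge> 0 \<or> (mu2 < 0 \<and> mu1 > 0 \<and> 1/mu1 + 1/mu2 + 1/l2 \<le> 0)"
        using c l2 by auto
      have m10: "0 \<le> mu1" using c l2 by simp
      note P = RPlim[OF l2 m10 refl m2 c3]
      have e1: "ext_val (sigma_f 7 mu1 mu2) \<infinity> (ereal l2) = ereal 0"
        by (rule ext_inf1'[where h = "\<lambda>t. 0"]) (simp_all add: sigma_f_def)
      have e2: "ext_val (sigmap_f 7 mu1 mu2) \<infinity> (ereal l2) = ereal ((l2 + mu1)/l2\<^sup>2)"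
        by (rule ext_inf1'[where h = "\<lambda>t. (l2 + mu1)/l2\<^sup>2"]) (simp_all add: sigmap_f_def)
      have "cert 7 \<infinity> (ereal l2) mu1 mu2"
        by (rule certI_inf1[OF e1 e2 _ P(1) hc_infI[of mu1 mu1] P(2)]) simp_all
      hence ?thesis using i7 by simp }
    moreover
    { assume i8: "i = 8"
      have False using D unfolding i8 by (auto simp: inDom_def Let_def)
      hence ?thesis .. }
    ultimately show ?thesis using iv by blast
  qed
qed

lemma cert_inf2:
  fixes l1 mu1 mu2 :: real
  assumes l1: "l1 > 0" and m1: "mu1 < l1"
    and i: "i \<in> {1..8}" and D: "inDom i (ereal l1) \<infinity> mu1 mu2"
  shows "cert i (ereal l1) \<infinity> mu1 mu2"
proof -
  have eS1: "ext_val (S1f mu1 mu2) (ereal l1) \<infinity> = ereal (1/mu1 + 1/mu2)"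
    by (rule ext_inf2'[where h = "\<lambda>t. (1/mu1 + 1/mu2) + 1/t"]) (simp add: S1f_def, rule LG)
  have eS2: "ext_val (S2f mu1 mu2) (ereal l1) \<infinity> = ereal (1/mu1 + 1/mu2 + 1/l1)"
    by (rule ext_inf2'[where h = "\<lambda>t. 1/mu1 + 1/mu2 + 1/l1"]) (simp_all add: S2f_def)
  have eT2: "ext_val (T2f mu1 mu2) (ereal l1) \<infinity> = ereal 0"
    by (rule ext_inf2'[where h = "\<lambda>t. 1/t * (2 + l1/mu1)"]) (simp add: T2f_def, rule LF)
  have iv: "i = 1 \<or> i = 2 \<or> i = 3 \<or> i = 4 \<or> i = 5 \<or> i = 6 \<or> i = 7 \<or> i = 8" using i by auto
  show ?thesis
  proof -
    { assume i1: "i = 1"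
      have False using D unfolding i1 by (auto simp: inDom_def Let_def)
      hence ?thesis .. }
    moreover
    { assume i2: "i = 2"
      have c: "mu2 < l1" "0 \<le> mu2" "mu1 \<ge> 0 \<or> (mu2 > - mu1 \<and> - mu1 > 0 \<and> 1/mu1 + 1/mu2 + 1/l1 \<le> 0)"
        using D unfolding i2 by (auto simp: inDom_def Let_def eS1 eS2 eT2)
      have c3: "mu1 \<ge> 0 \<or> (mu1 < 0 \<and> mu2 > 0 \<and> 1/mu2 + 1/mu1 + 1/l1 \<le> 0)" using c(3) by (auto simp: add.commute)
      have seq: "(1/l1)*(1 + mu2/l1) = (l1 + mu2)/l1\<^sup>2" using l1 by (simp add: field_simps power2_eq_square)
      note P = RPlim[OF l1 c(2) seq m1 c3]
      have e1: "ext_val (sigma_f 2 mu1 mu2) (ereal l1) \<infinity> = ereal ((1/l1)*(1 + mu2/l1))"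
        by (rule ext_inf2'[where h = "\<lambda>t. (1/l1)*(1 + mu2*(t - l1)/(l1*(t - mu2)))"])
          (simp add: sigma_f_def, rule LB, use l1 in simp)
      have e2: "ext_val (sigmap_f 2 mu1 mu2) (ereal l1) \<infinity> = ereal 0"
        by (rule ext_inf2'[where h = "\<lambda>t. (l1 - mu2)/(l1*(t - mu2))"]) (simp add: sigmap_f_def, rule LA, use l1 in simp)
      have "cert 2 (ereal l1) \<infinity> mu1 mu2"
        by (rule certI_inf2[OF e1 e2 P(1) _ P(2) hc_infI[of mu2 mu2]]) simp_all
      hence ?thesis using i2 by simp }
    moreover
    { assume i3: "i = 3"
      have c: "mu1 > - mu2" "- mu2 > 0" "l1 > mu2"
        using D unfolding i3 by (auto simp: inDom_def Let_def eS1 eS2 eT2)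
      have ma: "mu1 > 0" using c by simp
      have a0: "1/mu1 + 1/mu2 < 0" by (rule neg_inv_sum) (use c in auto)
      note R = R1S[OF ma m1 less_imp_le[OF a0]]
      have ne: "(1/mu1 + 1/mu2) - 1/l1 \<noteq> 0" using a0 l1 by (smt (verit) divide_pos_pos)
      have e1: "ext_val (sigma_f 3 mu1 mu2) (ereal l1) \<infinity> = ereal (((1/l1)*(1/mu1 + 1/mu2))/((1/mu1 + 1/mu2) - 1/l1))"
        by (rule ext_inf2'[where h = "\<lambda>t. (1/l1*((1/mu1 + 1/mu2) + 1/t))/(((1/mu1 + 1/mu2) + 1/t) - 1/l1)"])
          (simp add: sigma_f_def S1f_def, rule LD[OF ne])
      have e2: "ext_val (sigmap_f 3 mu1 mu2) (ereal l1) \<infinity> = ereal 0"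
        by (rule ext_inf2'[where h = "\<lambda>t. 1/(t + mu2)"]) (simp add: sigmap_f_def, rule LE)
      have sm: "mu1/(1 - mu1*(1/mu1 + 1/mu2)) + mu2 = 0"
        by (rule sumD3inf) (use c ma in auto)
      have "cert 3 (ereal l1) \<infinity> mu1 mu2"
        by (rule certI_inf2[OF e1 e2 R(1) _ R(2) hc_infI[of mu2 mu2]]) (use sm in simp_all)
      hence ?thesis using i3 by simp }
    moreover
    { assume i4: "i = 4"
      have c: "mu2 > - mu1" "- mu1 > 0" "l1 > mu2" "1/mu1 + 1/mu2 + 1/l1 \<le> 0"
        using D unfolding i4 by (auto simp: inDom_def Let_def eS1 eS2 eT2)
      have lb: "l1 + mu1 > 0" "mu1 < 0" "mu2 > 0" using c by auto
      note M = RMD3[OF lb(2) lb(1)]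
      have e1: "ext_val (sigma_f 4 mu1 mu2) (ereal l1) \<infinity> = ereal (1/(l1+mu1))"
        by (rule ext_inf2'[where h = "\<lambda>t. 1/(l1+mu1)"]) (simp_all add: sigma_f_def)
      have e2: "ext_val (sigmap_f 4 mu1 mu2) (ereal l1) \<infinity> = ereal 0"
        by (rule ext_inf2'[where h = "\<lambda>t. (1/t*(1/mu1 + 1/mu2 + 1/l1))/((1/mu1 + 1/mu2 + 1/l1) - 1/t)"])
          (simp add: sigmap_f_def S2f_def, rule LC)
      have sm: "mu2 + mu1*l1/(l1+mu1) \<ge> 0" by (rule sumD3infA) (use lb l1 c in \<open>auto simp: add.commute\<close>)
      have "cert 4 (ereal l1) \<infinity> mu1 mu2"
        by (rule certI_inf2[OF e1 e2 M(1) _ M(2) hc_infI[of mu2 mu2]]) (use sm in simp_all)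
      hence ?thesis using i4 by simp }
    moreover
    { assume i5: "i = 5"
      have c: "mu1 > - mu2" "- mu2 > 0" "0 < 1/mu1 + 1/mu2"
        using D unfolding i5 by (auto simp: inDom_def Let_def eS1 eS2 eT2)
      have "1/mu1 + 1/mu2 < 0" by (rule neg_inv_sum) (use c in auto)
      hence False using c(3) by simp
      hence ?thesis .. }
    moreover
    { assume i6: "i = 6"
      have c: "mu2 > - mu1" "- mu1 > 0" "0 < 1/mu1 + 1/mu2 + 1/l1"
        using D unfolding i6 by (auto simp: inDom_def Let_def eS1 eS2 eT2)
      have c3: "1/mu2 + 1/mu1 + 1/l1 > 0" using c(3) by (simp add: add.commute)
      note P = D5lem[OF c(1,2) l1 c3]
      have e1: "ext_val (sigma_f 6 mu1 mu2) (ereal l1) \<infinity> = ereal ((mu2 + mu1)/mu1\<^sup>2)"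
        by (rule ext_inf2'[where h = "\<lambda>t. (mu2 + mu1)/mu1\<^sup>2"]) (simp_all add: sigma_f_def add.commute)
      have e2: "ext_val (sigmap_f 6 mu1 mu2) (ereal l1) \<infinity> = ereal 0"
        by (rule ext_inf2'[where h = "\<lambda>t. 0"]) (simp_all add: sigmap_f_def)
      have "cert 6 (ereal l1) \<infinity> mu1 mu2"
        by (rule certI_inf2[OF e1 e2 P(1) _ P(2) hc_infI[of mu2 mu2]]) simp_all
      hence ?thesis using i6 by simp }
    moreover
    { assume i7: "i = 7"
      have False using D unfolding i7 by (auto simp: inDom_def Let_def)
      hence ?thesis .. }
    moreover
    { assume i8: "i = 8"
      have c: "mu2 > l1" "mu1 \<ge> 0 \<or> (mu1 < 0 \<and> 1/mu1 + 1/mu2 + 1/l1 \<le> 0)"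
        using D unfolding i8 by (auto simp: inDom_def Let_def eS1 eS2 eT2)
      have c3: "mu1 \<ge> 0 \<or> (mu1 < 0 \<and> mu2 > 0 \<and> 1/mu2 + 1/mu1 + 1/l1 \<le> 0)"
        using c l1 by (auto simp: add.commute)
      have m20: "0 \<le> mu2" using c l1 by simp
      note P = RPlim[OF l1 m20 refl m1 c3]
      have e1: "ext_val (sigma_f 8 mu1 mu2) (ereal l1) \<infinity> = ereal ((l1 + mu2)/l1\<^sup>2)"
        by (rule ext_inf2'[where h = "\<lambda>t. (l1 + mu2)/l1\<^sup>2"]) (simp_all add: sigma_f_def)
      have e2: "ext_val (sigmap_f 8 mu1 mu2) (ereal l1) \<infinity> = ereal 0"
        by (rule ext_inf2'[where h = "\<lambda>t. 0"]) (simp_all add: sigmap_f_def)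
      have "cert 8 (ereal l1) \<infinity> mu1 mu2"
        by (rule certI_inf2[OF e1 e2 P(1) _ P(2) hc_infI[of mu2 mu2]]) simp_all
      hence ?thesis using i8 by simp }
    ultimately show ?thesis using iv by blast
  qed
qed

lemma domain_cert:
  fixes L1 L2 :: ereal and mu1 mu2 :: real and i :: nat
  assumes L1pos: "L1 > 0" and L2pos: "L2 > 0"
    and notboth: "\<not> (L1 = \<infinity> \<and> L2 = \<infinity>)"
    and mu1L1: "ereal mu1 < L1" and mu2L2: "ereal mu2 < L2"
    and musum: "mu1 + mu2 > 0 \<or> (mu1 = 0 \<and> mu2 = 0)"
    and dom: "i \<in> {1..8}" "inDom i L1 L2 mu1 mu2"
  shows "\<exists>sg sp e1 e2. p_const i L1 L2 mu1 mu2 = ereal (sg + sp) \<and> sg \<ge> 0 \<and> sp \<ge> 0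
     \<and> hc mu1 L1 sg e1 \<and> hc mu2 L2 sp e2 \<and> e1 + e2 \<ge> 0"
proof -
  have "cert i L1 L2 mu1 mu2"
  proof (cases L1)
    case (real l1)
    note r1 = real
    show ?thesis
    proof (cases L2)
      case (real l2)
      show ?thesis unfolding r1 real
        by (rule cert_fin) (use L1pos L2pos mu1L1 mu2L2 musum dom r1 real in auto)
    next
      case PInf
      show ?thesis unfolding r1 PInf
        by (rule cert_inf2) (use L1pos mu1L1 dom r1 PInf in auto)
    next
      case MInf thus ?thesis using L2pos by simp
    qed
  next
    case PInf
    note p1 = PInf
    show ?thesis
    proof (cases L2)
      case (real l2)
      show ?thesis unfolding p1 real
        by (rule cert_inf1) (use L2pos mu2L2 dom p1 real in auto)
    next
      case PInf thus ?thesis using notboth p1 by simp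
    next
      case MInf thus ?thesis using L2pos by simp
    qed
  next
    case MInf thus ?thesis using L1pos by simp
  qed
  thus ?thesis unfolding cert_def .
qed

theorem mainTheorem4:
  fixes f1 f2 :: "'a::euclidean_space \<Rightarrow> real"
    and L1 L2 :: ereal and mu1 mu2 :: real
    and N :: nat and x g1 g2 :: "nat \<Rightarrow> 'a" and i :: nat
  assumes L1pos: "L1 > 0" and L2pos: "L2 > 0"
    and notboth: "\<not> (L1 = \<infinity> \<and> L2 = \<infinity>)"
    and mu1L1: "ereal mu1 < L1" and mu2L2: "ereal mu2 < L2"
    and musum: "mu1 + mu2 > 0 \<or> (mu1 = 0 \<and> mu2 = 0)"
    and f1cls: "FmuL mu1 L1 f1" and f2cls: "FmuL mu2 L2 f2"
    and Fbdd: "bdd_below (range (\<lambda>y. f1 y - f2 y))"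
    and N1: "N \<ge> 1"
    and g2sub: "\<And>k. k \<le> N \<Longrightarrow> g2 k \<in> subdiff mu2 f2 (x k)"
    and dca_step: "\<And>k w. k < N \<Longrightarrow>
        f1 (x (Suc k)) - inner (g2 k) (x (Suc k)) \<le> f1 w - inner (g2 k) w"
    and g1_def: "\<And>k. 1 \<le> k \<Longrightarrow> k \<le> N \<Longrightarrow> g1 k = g2 (k - 1)"
    and g10: "g1 0 \<in> subdiff mu1 f1 (x 0)"
    and dom: "i \<in> {1..8}" "inDom i L1 L2 mu1 mu2"
    and ppos: "p_const i L1 L2 mu1 mu2 > 0"
  shows "(1/2 * Min {(norm (g1 k - g2 k))\<^sup>2 | k. k \<le> N}
           \<le> ((f1 (x 0) - f2 (x 0)) - (f1 (x N) - f2 (x N)))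
               / (real_of_ereal (p_const i L1 L2 mu1 mu2) * real N))
     \<and> (L1 > ereal mu2 \<longrightarrow>
         1/2 * Min {(norm (g1 k - g2 k))\<^sup>2 | k. k \<le> N}
           \<le> ((f1 (x 0) - f2 (x 0)) - (INF y. f1 y - f2 y))
               / (real_of_ereal (p_const i L1 L2 mu1 mu2) * real N
                  + (if L1 = \<infinity> then 0 else 1 / (real_of_ereal L1 - mu2))))"
proof -
  obtain sg sp e1 e2 where pc: "p_const i L1 L2 mu1 mu2 = ereal (sg + sp)" and sg: "sg \<ge> 0" and sp: "sp \<ge> 0"
    and h1: "hc mu1 L1 sg e1" and h2: "hc mu2 L2 sp e2" and e12: "e1 + e2 \<ge> 0"
    using domain_cert[OF L1pos L2pos notboth mu1L1 mu2L2 musum dom] by blast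
  define F where "F = (\<lambda>y. f1 y - f2 y)"
  define G where "G = (\<lambda>k. (norm (g1 k - g2 k))\<^sup>2)"
  define p where "p = sg + sp"
  have pr: "real_of_ereal (p_const i L1 L2 mu1 mu2) = p" by (simp add: pc p_def)
  have pp: "p > 0" using ppos by (simp add: pc p_def)
  have min1: "f1 w \<ge> f1 (x (Suc k)) + inner (g2 k) (w - x (Suc k))" if "k < N" for k w
    using dca_step[OF that, of w] by (simp add: inner_diff_right)
  have s2: "subg f2 mu2 (x k) (g2 k)" if "k \<le> N" for k
    by (rule subg_from_subdiff[OF f2cls g2sub[OF that]])
  have s1n: "subg f1 mu1 (x (Suc k)) (g2 k)" if "k < N" for k
    by (rule subg_from_min[OF f1cls min1[OF that]])
  have s1: "subg f1 mu1 (x k) (g1 k)" if "k \<le> N" for k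
  proof (cases k)
    case 0
    thus ?thesis using subg_from_subdiff[OF f1cls g10] by simp
  next
    case (Suc j)
    hence "g1 k = g2 j" using g1_def[of k] that by simp
    thus ?thesis using s1n[of j] Suc that by simp
  qed
  have step: "F (x k) - F (x (Suc k)) \<ge> sg/2 * G k + sp/2 * G (Suc k)" if k: "k < N" for k
  proof -
    have a: "f1 (x k) - f1 (x (Suc k)) \<ge> inner (g2 k) (x k - x (Suc k)) + sg/2 * (norm (g1 k - g2 k))\<^sup>2
        + e1/2 * (norm (x k - x (Suc k)))\<^sup>2"
      by (rule half_hc[OF f1cls mu1L1 h1 s1 s1n]) (use k in auto)
    have b: "f2 (x (Suc k)) - f2 (x k) \<ge> inner (g2 k) (x (Suc k) - x k) + sp/2 * (norm (g2 (Suc k) - g2 k))\<^sup>2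
        + e2/2 * (norm (x (Suc k) - x k))\<^sup>2"
      by (rule half_hc[OF f2cls mu2L2 h2 s2 s2]) (use k in auto)
    have g1s: "g1 (Suc k) = g2 k" using g1_def[of "Suc k"] k by simp
    have G1: "G (Suc k) = (norm (g2 (Suc k) - g2 k))\<^sup>2"
      unfolding G_def g1s by (simp add: norm_minus_commute)
    have nn: "norm (x (Suc k) - x k) = norm (x k - x (Suc k))" by (rule norm_minus_commute)
    have ii: "inner (g2 k) (x (Suc k) - x k) = - inner (g2 k) (x k - x (Suc k))"
      by (simp add: inner_diff_right)
    have ee: "e1/2 * (norm (x k - x (Suc k)))\<^sup>2 + e2/2 * (norm (x k - x (Suc k)))\<^sup>2 \<ge> 0"
    proof -
      have "e1/2 * (norm (x k - x (Suc k)))\<^sup>2 + e2/2 * (norm (x k - x (Suc k)))\<^sup>2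
          = (e1 + e2)/2 * (norm (x k - x (Suc k)))\<^sup>2" by (simp add: field_simps)
      also have "\<dots> \<ge> 0" using e12 by simp
      finally show ?thesis .
    qed
    have Gk: "G k = (norm (g1 k - g2 k))\<^sup>2" by (simp add: G_def)
    show ?thesis using a b ee unfolding F_def Gk G1 nn ii by linarith
  qed
  define S where "S = {(norm (g1 k - g2 k))\<^sup>2 | k. k \<le> N}"
  have Sim: "S = G ` {..N}" by (auto simp: S_def G_def)
  have Sfin: "finite S" and Sne: "S \<noteq> {}" unfolding Sim by auto
  define m where "m = Min S"
  have mle: "m \<le> G k" if "k \<le> N" for k
    unfolding m_def by (rule Min_le[OF Sfin]) (use that Sim in auto)
  have step2: "F (x k) - F (x (Suc k)) \<ge> p/2 * m" if k: "k < N" for k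
  proof -
    have "sg/2 * m \<le> sg/2 * G k" using mle[of k] k sg by (intro mult_left_mono) auto
    moreover have "sp/2 * m \<le> sp/2 * G (Suc k)" using mle[of "Suc k"] k sp by (intro mult_left_mono) auto
    moreover have "p/2 * m = sg/2 * m + sp/2 * m" by (simp add: p_def field_simps)
    ultimately show ?thesis using step[OF k] by linarith
  qed
  have tele: "F (x 0) - F (x N) = (\<Sum>k<N. F (x k) - F (x (Suc k)))"
    using sum_lessThan_telescope'[of "\<lambda>k. F (x k)" N] by simp
  have sumge: "(\<Sum>k<N. F (x k) - F (x (Suc k))) \<ge> (\<Sum>k<N. p/2 * m)"
    by (rule sum_mono) (use step2 in auto)
  have A: "F (x 0) - F (x N) \<ge> real N * (p/2 * m)" using tele sumge by simp
  have Np: "real_of_ereal (p_const i L1 L2 mu1 mu2) * real N > 0" unfolding pr using pp N1 by simp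
  have first: "1/2 * m \<le> (F (x 0) - F (x N)) / (real_of_ereal (p_const i L1 L2 mu1 mu2) * real N)"
  proof -
    have "1/2 * m * (p * real N) \<le> F (x 0) - F (x N)" using A by (simp add: field_simps)
    thus ?thesis using Np unfolding pr by (simp add: field_simps)
  qed
  have second: "1/2 * m \<le> (F (x 0) - (INF y. F y))
     / (real_of_ereal (p_const i L1 L2 mu1 mu2) * real N + (if L1 = \<infinity> then 0 else 1 / (real_of_ereal L1 - mu2)))"
    if L1m: "L1 > ereal mu2"
  proof -
    define c where "c = (if L1 = \<infinity> then 0 else 1 / (real_of_ereal L1 - mu2))"
    have c0: "c \<ge> 0" using L1m by (cases L1) (auto simp: c_def)
    have Fb: "bdd_below (range F)" using Fbdd by (simp add: F_def)
    have FN: "F (x N) - (INF y. F y) \<ge> c/2 * G N"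
    proof (cases L1)
      case PInf
      have "(INF y. F y) \<le> F (x N)" by (rule cINF_lower[OF Fb]) simp
      thus ?thesis using PInf by (simp add: c_def)
    next
      case MInf
      thus ?thesis using L1pos by simp
    next
      case (real L1r)
      have lm: "L1r > mu2" using L1m real by simp
      have cc: "c = 1 / (L1r - mu2)" using real by (simp add: c_def)
      define Gv where "Gv = g1 N - g2 N"
      define v where "v = (- c) *\<^sub>R Gv"
      define z where "z = x N + v"
      have q: "convex_on UNIV (\<lambda>w. L1r/2 * (norm w)\<^sup>2 - f1 w)" using f1cls real by (simp add: FmuL_def)
      have gN: "g1 N = g2 (N - 1)" using g1_def[of N] N1 by simp
      have lbN: "f1 w \<ge> f1 (x N) + inner (g1 N) (w - x N)" for w
        using min1[of "N - 1" w] N1 unfolding gN by simp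
      have u1: "f1 z \<le> f1 (x N) + inner (g1 N) (z - x N) + L1r/2 * (norm (z - x N))\<^sup>2"
        by (rule descent[OF q _ lbN]) (use L1pos real in simp)
      have l2: "f2 z \<ge> f2 (x N) + inner (g2 N) (z - x N) + mu2/2 * (norm (z - x N))\<^sup>2"
        using s2[of N] unfolding subg_def by blast
      have zx: "z - x N = v" by (simp add: z_def)
      have n: "(norm v)\<^sup>2 = c\<^sup>2 * G N"
        unfolding v_def norm_scaleR_sq power2_minus by (simp add: Gv_def G_def)
      have iv: "inner (g1 N) v - inner (g2 N) v = - c * G N"
      proof -
        have "inner (g1 N) v - inner (g2 N) v = inner Gv v" by (simp add: Gv_def inner_diff_left)
        also have "\<dots> = - c * (norm Gv)\<^sup>2" by (simp add: v_def power2_norm_eq_inner)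
        finally show ?thesis by (simp add: G_def Gv_def)
      qed
      have Fz: "F z \<le> F (x N) - c * G N + (L1r - mu2)/2 * (c\<^sup>2 * G N)"
      proof -
        have "F z \<le> F (x N) + (inner (g1 N) v - inner (g2 N) v) + (L1r - mu2)/2 * (norm v)\<^sup>2"
        proof -
          have eq: "(L1r - mu2)/2 * (norm v)\<^sup>2 = L1r/2 * (norm v)\<^sup>2 - mu2/2 * (norm v)\<^sup>2" by algebra
          show ?thesis using u1 l2 unfolding F_def zx eq by linarith
        qed
        thus ?thesis unfolding iv n by simp
      qed
      have gen: "d/2 * ((1/d)\<^sup>2 * g) = (1/d)/2 * g" if "d \<noteq> 0" for d g :: real
        using that by (simp add: power2_eq_square)
      have cl: "(L1r - mu2)/2 * (c\<^sup>2 * G N) = c/2 * G N" unfolding cc by (rule gen) (use lm in simp)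
      have "(INF y. F y) \<le> F z" by (rule cINF_lower[OF Fb]) simp
      thus ?thesis using Fz unfolding cl by simp
    qed
    have "1/2 * m * (p * real N + c) \<le> F (x 0) - (INF y. F y)"
    proof -
      have "c/2 * m \<le> c/2 * G N" using mle[of N] c0 by (intro mult_left_mono) auto
      moreover have "1/2 * m * (p * real N + c) = real N * (p/2 * m) + c/2 * m" by (simp add: field_simps)
      ultimately show ?thesis using A FN by linarith
    qed
    moreover have "p * real N + c > 0" using Np c0 unfolding pr by simp
    ultimately show ?thesis unfolding pr c_def[symmetric] by (simp add: field_simps)
  qed
  show ?thesis using first second unfolding S_def[symmetric] m_def[symmetric] F_def by simp
qed


end
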